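(* In the linear mixture MDP setting with Algorithm 1 run for $K$ episodes as described in the context, with probability at least $1-\delta$, for every reward function $R=\{R_h\}$ with $R_h:\mathcal{S}\times\mathcal{A}\to[0,1]$, the policy $\hat\pi_R$ returned in the planning phase by an $\epsilon_{\rm opt}$-optimal plug-in solver on $(\mathcal{S},\mathcal{A},\tilde P,R,H,\nu)$ satisfies $$V_1^*(s_1,R)-V_1^{\hat\pi_R}(s_1,R)\le 4\tilde V_1^*(s_1,R_K)+\epsilon_{\rm opt},$$ where $R_K=\{R_{K,h}\}_h$ is the exploration-driven reward used in episode $K$ of the exploration phase.
   Context: Episodic MDP: state set $\mathcal{S}$, action set $\mathcal{A}$, horizon $H$, transitions $P_h(\cdot|s,a)$, deterministic rewards; every episode starts at fixed $s_1$. For a deterministic policy $\pi$ and transition $Q$, $V_h^{\pi,Q}(s,R)=\mathbb{E}[\sum_{h'=h}^H R_{h'}(s_{h'},\pi_{h'}(s_{h'}))\mid s_h=s,Q]$; $V^\pi_h$ uses the true $P$, $V_h^*=\max_\pi V_h^\pi$, $\hat V^{*,\tilde P}_1=\max_\pi V_1^{\pi,\tilde P}$. An $\epsilon_{\rm opt}$-optimal plug-in solver returns $\hat\pi_R$ with $\hat V_1^{*,\tilde P}(s_1,R)-V_1^{\hat\pi_R,\tilde P}(s_1,R)\le\epsilon_{\rm opt}$. For a nonnegative reward $R$ define $\tilde V^*_{H+1}(\cdot,R)=0$ and $\tilde V^*_h(s,R)=\max_{a}\min\{R_h(s,a)+\sum_{s'}P_h(s'|s,a)\tilde V^*_{h+1}(s',R),H\}$.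 Linear mixture MDP: known $\phi:\mathcal{S}\times\mathcal{A}\times\mathcal{S}\to\mathbb{R}^d$ with $\|\sum_{s'}\phi(s,a,s')V(s')\|_2\le1$ for all $V:\mathcal{S}\to[0,1]$, and unknown $\theta_h$, $\|\theta_h\|_2\le B$, with $P_h(s'|s,a)=\theta_h^\top\phi(s,a,s')$. $\|x\|_M=\sqrt{x^\top Mx}$. Algorithm 1: $\lambda=B^{-2}$, $\beta=H\sqrt{d\log(4H^3K\lambda^{-1}\delta^{-1})}+\sqrt\lambda B$, $\mathcal{V}=\{V:\mathcal{S}\to[0,H]\}$. For $k=1,\dots,K$: $V_{k,H+1}\equiv0$; for $h=H,\dots,1$: $\Lambda_{k,h}=\sum_{t<k}\phi_{t,h}(s_{t,h},a_{t,h})\phi_{t,h}(s_{t,h},a_{t,h})^\top+\lambda I$; $\hat\theta_{k,h}=\Lambda_{k,h}^{-1}\sum_{t<k}\phi_{t,h}(s_{t,h},a_{t,h})\tilde V_{t,h+1,s_{t,h},a_{t,h}}(s_{t,h+1})$; $\tilde V_{k,h+1,s,a}\in\arg\max_{V\in\mathcal{V}}\|\sum_{s'}\phi(s,a,s')V(s')\|_{\Lambda_{k,h}^{-1}}$; $\phi_{k,h}(s,a)=\sum_{s'}\phi(s,a,s')\tilde V_{k,h+1,s,a}(s')$; $u_{k,h}(s,a)=\beta\|\phi_{k,h}(s,a)\|_{\Lambda_{k,h}^{-1}}$; $R_{k,h}=u_{k,h}$; $Q_{k,h}(s,a)=\min\{\hat\theta_{k,h}^\top\sum_{s'}\phi(s,a,s')V_{k,h+1}(s')+R_{k,h}(s,a)+u_{k,h}(s,a),H\}$;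 $V_{k,h}=\max_aQ_{k,h}$, $\pi_{k,h}$ greedy. Execute $\pi_k$ from $s_1$ to collect $(s_{k,h},a_{k,h})_{h}$. Output $\tilde P_h=\tilde\theta_h^\top\phi$ with $\tilde\theta_h$ making $\tilde P_h$ a valid kernel and $\|\tilde\theta_h-\hat\theta_{K,h}\|_{\Lambda_{K,h}}\le\beta$. *)

theory Defs
  imports "HOL-Analysis.Analysis" "HOL-Probability.Probability"
begin

type_synonym ('s,'a) policy = "nat \<Rightarrow> 's \<Rightarrow> 'a"
(* a trajectory: states s_1..s_{H+1} and actions a_1..a_H (lists, 0-based storage) *)
type_synonym ('s,'a) traj = "'s list \<times> 'a list"

function Vpi :: "nat \<Rightarrow> (nat \<Rightarrow> 's::finite \<Rightarrow> 'a \<Rightarrow> 's \<Rightarrow> real) \<Rightarrow> ('s,'a) policy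
    \<Rightarrow> (nat \<Rightarrow> 's \<Rightarrow> 'a \<Rightarrow> real) \<Rightarrow> nat \<Rightarrow> 's \<Rightarrow> real" where
  "Vpi H Q \<pi> R h s = (if H < h then 0 else
     R h s (\<pi> h s) + (\<Sum>s'\<in>UNIV. Q h s (\<pi> h s) s' * Vpi H Q \<pi> R (Suc h) s'))"
  by pat_completeness auto
termination by (relation "Wellfounded.measure (\<lambda>(H,Q,\<pi>,R,h,s). Suc H - h)") auto

definition Vstar :: "nat \<Rightarrow> (nat \<Rightarrow> 's::finite \<Rightarrow> 'a \<Rightarrow> 's \<Rightarrow> real)
    \<Rightarrow> (nat \<Rightarrow> 's \<Rightarrow> 'a \<Rightarrow> real) \<Rightarrow> nat \<Rightarrow> 's \<Rightarrow> real" where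
  "Vstar H Q R h s = Sup (range (\<lambda>\<pi>. Vpi H Q \<pi> R h s))"

function Vtstar :: "nat \<Rightarrow> (nat \<Rightarrow> 's::finite \<Rightarrow> 'a::finite \<Rightarrow> 's \<Rightarrow> real)
    \<Rightarrow> (nat \<Rightarrow> 's \<Rightarrow> 'a \<Rightarrow> real) \<Rightarrow> nat \<Rightarrow> 's \<Rightarrow> real" where
  "Vtstar H Q R h s = (if H < h then 0 else
     Max (range (\<lambda>a. min (R h s a + (\<Sum>s'\<in>UNIV. Q h s a s' * Vtstar H Q R (Suc h) s')) (real H))))"
  by pat_completeness auto
termination by (relation "Wellfounded.measure (\<lambda>(H,Q,R,h,s). Suc H - h)") auto

definition wnorm :: "real^'d \<Rightarrow> real^'d^'d \<Rightarrow> real" where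
  "wnorm x M = sqrt (x \<bullet> (M *v x))"

definition featV :: "('s::finite \<Rightarrow> 'a \<Rightarrow> 's \<Rightarrow> real^'d) \<Rightarrow> 's \<Rightarrow> 'a \<Rightarrow> ('s \<Rightarrow> real) \<Rightarrow> real^'d" where
  "featV phi s a V = (\<Sum>s'\<in>UNIV. V s' *\<^sub>R phi s a s')"

definition Vset :: "nat \<Rightarrow> ('s \<Rightarrow> real) set" where
  "Vset H = {V. \<forall>s. 0 \<le> V s \<and> V s \<le> real H}"

definition Vsel :: "('s::finite \<Rightarrow> 'a \<Rightarrow> 's \<Rightarrow> real^'d) \<Rightarrow> nat \<Rightarrow> real^'d^'d \<Rightarrow> 's \<Rightarrow> 'a \<Rightarrow> ('s \<Rightarrow> real)" where
  "Vsel phi H M s a = (SOME V. V \<in> Vset H \<and>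
     (\<forall>W\<in>Vset H. wnorm (featV phi s a W) (matrix_inv M) \<le> wnorm (featV phi s a V) (matrix_inv M)))"

definition phiK :: "('s::finite \<Rightarrow> 'a \<Rightarrow> 's \<Rightarrow> real^'d) \<Rightarrow> nat \<Rightarrow> real^'d^'d \<Rightarrow> 's \<Rightarrow> 'a \<Rightarrow> real^'d" where
  "phiK phi H M s a = featV phi s a (Vsel phi H M s a)"

definition outer :: "real^'d \<Rightarrow> real^'d^'d" where
  "outer x = (\<chi> i j. x $ i * x $ j)"

(* s_{t,h} and a_{t,h} from the history (episodes t = 1,2,..., steps h = 1,2,...) *)
definition st :: "('s,'a) traj list \<Rightarrow> nat \<Rightarrow> nat \<Rightarrow> 's" where
  "st hs t h = fst (hs ! (t - 1)) ! (h - 1)"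
definition ac :: "('s,'a) traj list \<Rightarrow> nat \<Rightarrow> nat \<Rightarrow> 'a" where
  "ac hs t h = snd (hs ! (t - 1)) ! (h - 1)"

primrec Gram :: "('s::finite \<Rightarrow> 'a \<Rightarrow> 's \<Rightarrow> real^'d) \<Rightarrow> nat \<Rightarrow> real \<Rightarrow> ('s,'a) traj list
    \<Rightarrow> nat \<Rightarrow> nat \<Rightarrow> real^'d^'d" where
  "Gram phi H lam hs h 0 = lam *\<^sub>R mat 1"
| "Gram phi H lam hs h (Suc n) =
     Gram phi H lam hs h n + outer (phiK phi H (Gram phi H lam hs h n) (st hs (Suc n) h) (ac hs (Suc n) h))"

definition Lam :: "('s::finite \<Rightarrow> 'a \<Rightarrow> 's \<Rightarrow> real^'d) \<Rightarrow> nat \<Rightarrow> real \<Rightarrow> ('s,'a) traj list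
    \<Rightarrow> nat \<Rightarrow> nat \<Rightarrow> real^'d^'d" where
  "Lam phi H lam hs k h = Gram phi H lam hs h (k - 1)"

definition thetahat :: "('s::finite \<Rightarrow> 'a \<Rightarrow> 's \<Rightarrow> real^'d) \<Rightarrow> nat \<Rightarrow> real \<Rightarrow> ('s,'a) traj list
    \<Rightarrow> nat \<Rightarrow> nat \<Rightarrow> real^'d" where
  "thetahat phi H lam hs k h = matrix_inv (Lam phi H lam hs k h) *v
     (\<Sum>t\<in>{1..<k}. Vsel phi H (Lam phi H lam hs t h) (st hs t h) (ac hs t h) (st hs t (Suc h))
                    *\<^sub>R phiK phi H (Lam phi H lam hs t h) (st hs t h) (ac hs t h))"

(* u_{k,h}(s,a) (= exploration reward R_{k,h}) *)
definition bonus :: "('s::finite \<Rightarrow> 'a \<Rightarrow> 's \<Rightarrow> real^'d) \<Rightarrow> nat \<Rightarrow> real \<Rightarrow> real \<Rightarrow> ('s,'a) traj list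
    \<Rightarrow> nat \<Rightarrow> nat \<Rightarrow> 's \<Rightarrow> 'a \<Rightarrow> real" where
  "bonus phi H lam beta hs k h s a =
     beta * wnorm (phiK phi H (Lam phi H lam hs k h) s a) (matrix_inv (Lam phi H lam hs k h))"

function Vopt :: "('s::finite \<Rightarrow> 'a::finite \<Rightarrow> 's \<Rightarrow> real^'d) \<Rightarrow> nat \<Rightarrow> real \<Rightarrow> real \<Rightarrow> ('s,'a) traj list
    \<Rightarrow> nat \<Rightarrow> nat \<Rightarrow> 's \<Rightarrow> real" where
  "Vopt phi H lam beta hs k h s = (if H < h then 0 else
     Max (range (\<lambda>a. min (thetahat phi H lam hs k h \<bullet> featV phi s a (Vopt phi H lam beta hs k (Suc h))
        + bonus phi H lam beta hs k h s a + bonus phi H lam beta hs k h s a) (real H))))"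
  by pat_completeness auto
termination by (relation "Wellfounded.measure (\<lambda>(phi,H,lam,beta,hs,k,h,s). Suc H - h)") auto

definition Qopt :: "('s::finite \<Rightarrow> 'a::finite \<Rightarrow> 's \<Rightarrow> real^'d) \<Rightarrow> nat \<Rightarrow> real \<Rightarrow> real \<Rightarrow> ('s,'a) traj list
    \<Rightarrow> nat \<Rightarrow> nat \<Rightarrow> 's \<Rightarrow> 'a \<Rightarrow> real" where
  "Qopt phi H lam beta hs k h s a = min (thetahat phi H lam hs k h \<bullet> featV phi s a (Vopt phi H lam beta hs k (Suc h))
        + bonus phi H lam beta hs k h s a + bonus phi H lam beta hs k h s a) (real H)"

definition polk :: "('s::finite \<Rightarrow> 'a::finite \<Rightarrow> 's \<Rightarrow> real^'d) \<Rightarrow> nat \<Rightarrow> real \<Rightarrow> real \<Rightarrow> ('s,'a) traj list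
    \<Rightarrow> nat \<Rightarrow> ('s,'a) policy" where
  "polk phi H lam beta hs k h s =
     (SOME a. \<forall>b. Qopt phi H lam beta hs k h s b \<le> Qopt phi H lam beta hs k h s a)"

primrec gen :: "(nat \<Rightarrow> 's \<Rightarrow> 'a \<Rightarrow> 's pmf) \<Rightarrow> ('s,'a) policy \<Rightarrow> nat \<Rightarrow> nat \<Rightarrow> 's \<Rightarrow> ('s,'a) traj pmf" where
  "gen P \<pi> h 0 s = return_pmf ([s], [])"
| "gen P \<pi> h (Suc n) s = bind_pmf (P h s (\<pi> h s))
     (\<lambda>s'. map_pmf (\<lambda>(ss, as). (s # ss, \<pi> h s # as)) (gen P \<pi> (Suc h) n s'))"

(* sequential exploration: pol maps the current history to the next policy *)
primrec explore :: "(nat \<Rightarrow> 's \<Rightarrow> 'a \<Rightarrow> 's pmf) \<Rightarrow> 's \<Rightarrow> nat \<Rightarrow> (('s,'a) traj list \<Rightarrow> ('s,'a) policy)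
    \<Rightarrow> nat \<Rightarrow> ('s,'a) traj list \<Rightarrow> ('s,'a) traj list pmf" where
  "explore P s1 H pol 0 hs = return_pmf hs"
| "explore P s1 H pol (Suc n) hs =
     bind_pmf (gen P (pol hs) 1 H s1) (\<lambda>\<tau>. explore P s1 H pol n (hs @ [\<tau>]))"

definition exploration :: "('s::finite \<Rightarrow> 'a::finite \<Rightarrow> 's \<Rightarrow> real^'d) \<Rightarrow> nat \<Rightarrow> real \<Rightarrow> real
    \<Rightarrow> (nat \<Rightarrow> 's \<Rightarrow> 'a \<Rightarrow> 's pmf) \<Rightarrow> 's \<Rightarrow> nat \<Rightarrow> ('s,'a) traj list pmf" where
  "exploration phi H lam beta P s1 K =
     explore P s1 H (\<lambda>hs. polk phi H lam beta hs (Suc (length hs))) K []"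

end

theory Submission
  imports Defs "HOL-Probability.Probability"
begin

lemma psd_cs:
  fixes M :: "real^'d^'d"
  assumes sym: "\<And>u v. u \<bullet> (M *v v) = v \<bullet> (M *v u)"
    and psd: "\<And>u. 0 \<le> u \<bullet> (M *v u)"
  shows "\<bar>u \<bullet> (M *v v)\<bar> \<le> sqrt (u \<bullet> (M *v u)) * sqrt (v \<bullet> (M *v v))"
proof -
  define a where "a = u \<bullet> (M *v u)"
  define b where "b = v \<bullet> (M *v v)"
  define c where "c = u \<bullet> (M *v v)"
  have q: "0 \<le> a - 2 * t * c + t^2 * b" for t
  proof -
    have "0 \<le> (u - t *\<^sub>R v) \<bullet> (M *v (u - t *\<^sub>R v))" by (rule psd)
    also have "\<dots> = a - t * (u \<bullet> (M *v v)) - t * (v \<bullet> (M *v u)) + t^2 * b"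
      by (simp add: a_def b_def matrix_vector_mult_diff_distrib matrix_vector_mult_scaleR
          inner_diff_left inner_diff_right algebra_simps power2_eq_square)
    finally show ?thesis using sym[of u v] by (simp add: c_def)
  qed
  have a0: "0 \<le> a" "0 \<le> b" using psd by (auto simp: a_def b_def)
  have "c^2 \<le> a * b"
  proof (cases "b = 0")
    case True
    have "c = 0"
    proof (rule ccontr)
      assume "c \<noteq> 0"
      have "0 \<le> a - 2 * ((a + 1) / (2 * c)) * c" using q[of "(a+1)/(2*c)"] True by simp
      also have "\<dots> = -1" using \<open>c \<noteq> 0\<close> by (simp add: field_simps)
      finally show False by simp
    qed
    then show ?thesis using a0 by simp
  next
    case False
    hence bp: "b > 0" using a0 by simp
    have "0 \<le> a - 2 * (c/b) * c + (c/b)^2 * b" by (rule q)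
    also have "\<dots> = a - c^2 / b" using bp by (simp add: field_simps power2_eq_square)
    finally have "c^2 / b \<le> a" by simp
    then show ?thesis using bp by (simp add: field_simps mult.commute)
  qed
  hence "sqrt (c^2) \<le> sqrt (a * b)" by (rule real_sqrt_le_mono)
  thus ?thesis by (simp add: a_def b_def c_def real_sqrt_mult)
qed

lemma psd_triangle:
  fixes M :: "real^'d^'d"
  assumes sym: "\<And>u v. u \<bullet> (M *v v) = v \<bullet> (M *v u)"
    and psd: "\<And>u. 0 \<le> u \<bullet> (M *v u)"
  shows "wnorm (u + v) M \<le> wnorm u M + wnorm v M"
proof -
  have e: "(u + v) \<bullet> (M *v (u + v)) = u \<bullet> (M *v u) + 2 * (u \<bullet> (M *v v)) + v \<bullet> (M *v v)"
    using sym[of v u] by (simp add: matrix_vector_right_distrib inner_add_left inner_add_right)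
  have cs: "u \<bullet> (M *v v) \<le> wnorm u M * wnorm v M"
    using psd_cs[OF sym psd, of u v] by (simp add: wnorm_def)
  have "(u + v) \<bullet> (M *v (u + v)) \<le> (wnorm u M + wnorm v M)^2"
    using cs psd[of u] psd[of v] sym[of v u] by (simp add: e wnorm_def power2_eq_square algebra_simps)
  hence "sqrt ((u + v) \<bullet> (M *v (u + v))) \<le> sqrt ((wnorm u M + wnorm v M)^2)"
    by (rule real_sqrt_le_mono)
  also have "\<dots> = wnorm u M + wnorm v M"
    using psd[of u] psd[of v] by (simp add: wnorm_def)
  finally show ?thesis by (simp add: wnorm_def)
qed

lemma wnorm_nonneg: "(\<And>u. 0 \<le> u \<bullet> (M *v u)) \<Longrightarrow> 0 \<le> wnorm u M"
  by (simp add: wnorm_def)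

lemma outer_mult: "outer x *v u = (x \<bullet> u) *\<^sub>R x"
  by (simp add: outer_def matrix_vector_mult_def inner_vec_def vec_eq_iff sum_distrib_left
      sum_distrib_right mult.commute mult.left_commute)

definition phit where
  "phit phi H lam hs h t = phiK phi H (Gram phi H lam hs h (t - 1)) (st hs t h) (ac hs t h)"

lemma Gram_mult:
  "Gram phi H lam hs h n *v u = lam *\<^sub>R u + (\<Sum>t\<in>{1..n}. (phit phi H lam hs h t \<bullet> u) *\<^sub>R phit phi H lam hs h t)"
proof (induction n)
  case 0 then show ?case by (simp add: scaleR_matrix_vector_assoc[symmetric])
next
  case (Suc n)
  have "Gram phi H lam hs h (Suc n) *v u = Gram phi H lam hs h n *v u
        + (phit phi H lam hs h (Suc n) \<bullet> u) *\<^sub>R phit phi H lam hs h (Suc n)"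
    by (simp add: matrix_vector_mult_add_rdistrib outer_mult phit_def)
  then show ?case using Suc by (simp add: add.assoc)
qed

lemma Gram_form:
  "v \<bullet> (Gram phi H lam hs h n *v u) = lam * (v \<bullet> u) + (\<Sum>t\<in>{1..n}. (phit phi H lam hs h t \<bullet> v) * (phit phi H lam hs h t \<bullet> u))"
  by (simp add: Gram_mult inner_sum_right inner_add_right) (rule sum.cong, auto simp: inner_commute)

lemma Gram_sym: "v \<bullet> (Gram phi H lam hs h n *v u) = u \<bullet> (Gram phi H lam hs h n *v v)"
  by (simp add: Gram_form inner_commute mult.commute)

lemma Gram_lower: "lam * (u \<bullet> u) \<le> u \<bullet> (Gram phi H lam hs h n *v u)"
  by (simp add: Gram_form sum_nonneg)

lemma Gram_psd: "lam \<ge> 0 \<Longrightarrow> 0 \<le> u \<bullet> (Gram phi H lam hs h n *v u)"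
  by (simp add: Gram_form sum_nonneg)

lemma Gram_inv:
  assumes "lam > 0"
  shows "Gram phi H lam hs h n ** matrix_inv (Gram phi H lam hs h n) = mat 1"
        "matrix_inv (Gram phi H lam hs h n) ** Gram phi H lam hs h n = mat 1"
proof -
  let ?G = "Gram phi H lam hs h n"
  have "inj ((*v) ?G)"
    unfolding vec.inj_iff_eq_0
  proof (intro allI impI)
    fix x assume "?G *v x = 0"
    hence "lam * (x \<bullet> x) \<le> 0" using Gram_lower[of lam x phi H hs h n] by simp
    hence "x \<bullet> x \<le> 0" using assms by (simp add: mult_le_0_iff)
    thus "x = 0" by (metis inner_eq_zero_iff inner_ge_zero order_antisym)
  qed
  then obtain B where "B ** ?G = mat 1" using matrix_left_invertible_injective by blast
  hence ex: "\<exists>A'. ?G ** A' = mat 1 \<and> A' ** ?G = mat 1"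
    using matrix_left_right_inverse by blast
  show "?G ** matrix_inv ?G = mat 1" "matrix_inv ?G ** ?G = mat 1"
    unfolding matrix_inv_def using someI_ex[OF ex] by auto
qed

lemma Gram_inv_vec:
  assumes "lam > 0"
  shows "Gram phi H lam hs h n *v (matrix_inv (Gram phi H lam hs h n) *v f) = f"
        "matrix_inv (Gram phi H lam hs h n) *v (Gram phi H lam hs h n *v f) = f"
  by (metis Gram_inv(1)[OF assms] matrix_vector_mul_assoc matrix_vector_mul_lid)
     (metis Gram_inv(2)[OF assms] matrix_vector_mul_assoc matrix_vector_mul_lid)


lemma featV_scale: "featV phi s a (\<lambda>s'. c * V s') = c *\<^sub>R featV phi s a V"
  by (simp add: featV_def scaleR_sum_right)

lemma inner_featV: "th \<bullet> featV phi s a V = (\<Sum>s'\<in>UNIV. (th \<bullet> phi s a s') * V s')"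
  by (simp add: featV_def inner_sum_right mult.commute)

lemma featV_diff: "(x - y) \<bullet> featV phi s a V = x \<bullet> featV phi s a V - y \<bullet> featV phi s a V"
  by (simp add: inner_diff_left)

lemma featV_norm:
  assumes feat: "\<forall>s a V. (\<forall>s'. 0 \<le> V s' \<and> V s' \<le> 1) \<longrightarrow> norm (featV phi s a V) \<le> 1"
    and H: "H \<ge> 1" and V: "V \<in> Vset H"
  shows "norm (featV phi s a V) \<le> real H"
proof -
  have "\<forall>s'. 0 \<le> V s' / real H \<and> V s' / real H \<le> 1" using V H by (auto simp: Vset_def)
  hence "norm (featV phi s a (\<lambda>s'. (1 / real H) * V s')) \<le> 1" using feat by auto
  hence "norm ((1 / real H) *\<^sub>R featV phi s a V) \<le> 1" by (simp only: featV_scale)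
  hence "(1 / real H) * norm (featV phi s a V) \<le> 1" using H by simp
  thus ?thesis using H by (simp add: field_simps)
qed

lemma Vsel_exists:
  fixes phi :: "'s::finite \<Rightarrow> 'a \<Rightarrow> 's \<Rightarrow> real^'d"
  shows "\<exists>V. V \<in> Vset H \<and>
     (\<forall>W\<in>Vset H. wnorm (featV phi s a W) (matrix_inv M) \<le> wnorm (featV phi s a V) (matrix_inv M))"
proof -
  define f where "f = (\<lambda>v::real^'s. wnorm (featV phi s a (\<lambda>s'. v $ s')) (matrix_inv M))"
  define B where "B = cbox (0::real^'s) (\<chi> i. real H)"
  have cont: "continuous_on B f"
    unfolding f_def wnorm_def featV_def matrix_vector_mult_def
    by (intro continuous_intros)
  have "compact B" unfolding B_def by (rule compact_cbox)
  have "0 \<in> B" by (simp add: B_def mem_box_cart)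
  hence "B \<noteq> {}" by auto
  then obtain v where v: "v \<in> B" "\<forall>y\<in>B. f y \<le> f v"
    using continuous_attains_sup[OF \<open>compact B\<close> _ cont] by blast
  have inB: "((\<chi> s. W s)::real^'s) \<in> B" if "W \<in> Vset H" for W :: "'s \<Rightarrow> real"
    using that by (auto simp: B_def Vset_def mem_box_cart)
  show ?thesis
  proof (intro exI conjI ballI)
    show "(\<lambda>s'. v $ s') \<in> Vset H" using v(1) by (auto simp: B_def Vset_def mem_box_cart)
    fix W :: "'s \<Rightarrow> real" assume "W \<in> Vset H"
    from v(2)[rule_format, OF inB[OF this]]
    show "wnorm (featV phi s a W) (matrix_inv M) \<le> wnorm (featV phi s a (($) v)) (matrix_inv M)"
      by (simp add: f_def vec_lambda_inverse)
  qed
qed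

lemma Vsel_spec:
  "Vsel phi H M s a \<in> Vset H"
  "W \<in> Vset H \<Longrightarrow> wnorm (featV phi s a W) (matrix_inv M) \<le> wnorm (phiK phi H M s a) (matrix_inv M)"
  using someI_ex[OF Vsel_exists[of H phi s a M]] unfolding Vsel_def[symmetric] phiK_def by auto


declare Vpi.simps[simp del] Vtstar.simps[simp del] Vopt.simps[simp del]

definition validK :: "nat \<Rightarrow> (nat \<Rightarrow> 's::finite \<Rightarrow> 'a \<Rightarrow> 's \<Rightarrow> real) \<Rightarrow> bool" where
  "validK H Q = (\<forall>h\<in>{1..H}. (\<forall>s a s'. 0 \<le> Q h s a s') \<and> (\<forall>s a. (\<Sum>s'\<in>UNIV. Q h s a s') = 1))"

definition validR :: "nat \<Rightarrow> (nat \<Rightarrow> 's \<Rightarrow> 'a \<Rightarrow> real) \<Rightarrow> bool" where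
  "validR H R = (\<forall>h\<in>{1..H}. \<forall>s a. 0 \<le> R h s a \<and> R h s a \<le> 1)"

lemma Vpi_step: "h \<le> H \<Longrightarrow> Vpi H Q \<pi> R h s = R h s (\<pi> h s) + (\<Sum>s'\<in>UNIV. Q h s (\<pi> h s) s' * Vpi H Q \<pi> R (Suc h) s')"
  by (subst Vpi.simps) simp

lemma Vpi_end: "H < h \<Longrightarrow> Vpi H Q \<pi> R h s = 0"
  by (subst Vpi.simps) simp

lemma Vtstar_end: "H < h \<Longrightarrow> Vtstar H Q R h s = 0"
  by (subst Vtstar.simps) simp

lemma Vtstar_ge: "h \<le> H \<Longrightarrow>
  min (R h s a + (\<Sum>s'\<in>UNIV. Q h s a s' * Vtstar H Q R (Suc h) s')) (real H) \<le> Vtstar H Q R h s"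
  by (subst (2) Vtstar.simps) (auto intro!: Max_ge)

lemma sum_kernel_bounds:
  fixes Q :: "'s::finite \<Rightarrow> real"
  assumes "\<forall>s'. 0 \<le> Q s'" "(\<Sum>s'\<in>UNIV. Q s') = 1" "\<forall>s'. lo \<le> V s' \<and> V s' \<le> hi"
  shows "lo \<le> (\<Sum>s'\<in>UNIV. Q s' * V s')" "(\<Sum>s'\<in>UNIV. Q s' * V s') \<le> hi"
proof -
  have "(\<Sum>s'\<in>UNIV. Q s' * lo) \<le> (\<Sum>s'\<in>UNIV. Q s' * V s')"
    using assms by (intro sum_mono mult_left_mono) auto
  thus "lo \<le> (\<Sum>s'\<in>UNIV. Q s' * V s')" using assms(2) by (simp add: sum_distrib_right[symmetric])
  have "(\<Sum>s'\<in>UNIV. Q s' * V s') \<le> (\<Sum>s'\<in>UNIV. Q s' * hi)"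
    using assms by (intro sum_mono mult_left_mono) auto
  thus "(\<Sum>s'\<in>UNIV. Q s' * V s') \<le> hi" using assms(2) by (simp add: sum_distrib_right[symmetric])
qed

lemma Vpi_bounds:
  assumes Q: "validK H Q" and R: "validR H R" and h: "1 \<le> h"
  shows "0 \<le> Vpi H Q \<pi> R h s \<and> Vpi H Q \<pi> R h s \<le> real (Suc H - h)"
  using h
proof (induction "Suc H - h" arbitrary: h s)
  case 0 then show ?case by (simp add: Vpi_end)
next
  case (Suc k)
  hence hH: "h \<le> H" by simp
  have kk: "k = Suc H - Suc h" using Suc.hyps(2) by simp
  have IH: "\<forall>s'. 0 \<le> Vpi H Q \<pi> R (Suc h) s' \<and> Vpi H Q \<pi> R (Suc h) s' \<le> real (Suc H - Suc h)"
    using Suc.hyps(1)[OF kk] by simp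
  have hq: "\<forall>s'. 0 \<le> Q h s (\<pi> h s) s'" "(\<Sum>s'\<in>UNIV. Q h s (\<pi> h s) s') = 1"
    using Q hH Suc.prems by (auto simp: validK_def)
  have r: "0 \<le> R h s (\<pi> h s)" "R h s (\<pi> h s) \<le> 1" using R hH Suc.prems by (auto simp: validR_def)
  note b = sum_kernel_bounds[OF hq IH]
  have "real (Suc H - Suc h) + 1 = real (Suc H - h)" using hH by simp
  then show ?case using b r by (simp add: Vpi_step[OF hH])
qed

lemma Vpi_Vset:
  assumes "validK H Q" "validR H R" "1 \<le> h"
  shows "Vpi H Q \<pi> R h \<in> Vset H"
proof -
  have "real (Suc H - h) \<le> real H" using assms(3) by simp
  have "\<forall>s. 0 \<le> Vpi H Q \<pi> R h s \<and> Vpi H Q \<pi> R h s \<le> real H"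
  proof
    fix s show "0 \<le> Vpi H Q \<pi> R h s \<and> Vpi H Q \<pi> R h s \<le> real H"
      using Vpi_bounds[OF assms, of \<pi> s] \<open>real (Suc H - h) \<le> real H\<close> by linarith
  qed
  thus ?thesis by (simp add: Vset_def)
qed

lemma Vtstar_nonneg:
  assumes "\<forall>h\<in>{1..H}. \<forall>s a. 0 \<le> u h s a" "validK H P" "1 \<le> h"
  shows "0 \<le> Vtstar H P u h s"
  using assms(3)
proof (induction "Suc H - h" arbitrary: h s)
  case 0 then show ?case by (simp add: Vtstar_end)
next
  case (Suc k)
  hence hH: "h \<le> H" by simp
  obtain a :: 'b where True by simp
  have hq: "\<forall>s'. 0 \<le> P h s a s'" using assms hH Suc by (auto simp: validK_def)
  have "0 \<le> min (u h s a + (\<Sum>s'\<in>UNIV. P h s a s' * Vtstar H P u (Suc h) s')) (real H)"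
    using Suc assms hH hq by (auto intro!: add_nonneg_nonneg sum_nonneg)
  also have "\<dots> \<le> Vtstar H P u h s" by (rule Vtstar_ge[OF hH])
  finally show ?case .
qed

lemma sim_lemma:
  fixes Q P :: "nat \<Rightarrow> 's::finite \<Rightarrow> 'a::finite \<Rightarrow> 's \<Rightarrow> real"
  assumes Q: "validK H Q" and P: "validK H P" and R: "validR H R"
    and err: "\<forall>h\<in>{1..H}. \<forall>s a V. V \<in> Vset H \<longrightarrow>
        \<bar>(\<Sum>s'\<in>UNIV. Q h s a s' * V s') - (\<Sum>s'\<in>UNIV. P h s a s' * V s')\<bar> \<le> 2 * u h s a"
    and h: "1 \<le> h"
  shows "\<bar>Vpi H Q \<pi> R h s - Vpi H P \<pi> R h s\<bar> \<le> 2 * Vtstar H P u h s"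
  using h
proof (induction "Suc H - h" arbitrary: h s)
  case 0 then show ?case by (simp add: Vpi_end Vtstar_end)
next
  case (Suc k)
  hence hH: "h \<le> H" and h1: "1 \<le> h" by auto
  define a where "a = \<pi> h s"
  define V1 where "V1 = Vpi H Q \<pi> R (Suc h)"
  define V2 where "V2 = Vpi H P \<pi> R (Suc h)"
  define W where "W = Vtstar H P u (Suc h)"
  have IH: "\<forall>s'. \<bar>V1 s' - V2 s'\<bar> \<le> 2 * W s'"
    using Suc by (auto simp: V1_def V2_def W_def)
  have V1: "V1 \<in> Vset H" unfolding V1_def by (rule Vpi_Vset[OF Q R]) simp
  have pq: "\<forall>s'. 0 \<le> P h s a s'" using P hH h1 by (auto simp: validK_def)
  have e1: "\<bar>(\<Sum>s'\<in>UNIV. Q h s a s' * V1 s') - (\<Sum>s'\<in>UNIV. P h s a s' * V1 s')\<bar> \<le> 2 * u h s a"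
    using err hH h1 V1 by auto
  have e2: "\<bar>(\<Sum>s'\<in>UNIV. P h s a s' * V1 s') - (\<Sum>s'\<in>UNIV. P h s a s' * V2 s')\<bar>
      \<le> (\<Sum>s'\<in>UNIV. P h s a s' * (2 * W s'))"
  proof -
    have "\<bar>(\<Sum>s'\<in>UNIV. P h s a s' * V1 s') - (\<Sum>s'\<in>UNIV. P h s a s' * V2 s')\<bar>
        = \<bar>\<Sum>s'\<in>UNIV. P h s a s' * (V1 s' - V2 s')\<bar>"
      by (simp add: sum_subtractf right_diff_distrib)
    also have "\<dots> \<le> (\<Sum>s'\<in>UNIV. \<bar>P h s a s' * (V1 s' - V2 s')\<bar>)" by (rule sum_abs)
    also have "\<dots> \<le> (\<Sum>s'\<in>UNIV. P h s a s' * (2 * W s'))"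
      using pq IH by (intro sum_mono) (auto simp: abs_mult intro: mult_left_mono)
    finally show ?thesis .
  qed
  have d: "\<bar>Vpi H Q \<pi> R h s - Vpi H P \<pi> R h s\<bar>
      = \<bar>(\<Sum>s'\<in>UNIV. Q h s a s' * V1 s') - (\<Sum>s'\<in>UNIV. P h s a s' * V2 s')\<bar>"
    by (simp add: Vpi_step[OF hH] a_def V1_def V2_def)
  have b1: "\<bar>Vpi H Q \<pi> R h s - Vpi H P \<pi> R h s\<bar> \<le> 2 * (u h s a + (\<Sum>s'\<in>UNIV. P h s a s' * W s'))"
    using d e1 e2 by (simp add: sum_distrib_left mult.left_commute)
  have b2: "\<bar>Vpi H Q \<pi> R h s - Vpi H P \<pi> R h s\<bar> \<le> real H"
  proof -
    have "real (Suc H - h) \<le> real H" using h1 by simp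
    thus ?thesis using Vpi_bounds[OF Q R h1, of \<pi> s] Vpi_bounds[OF P R h1, of \<pi> s] by auto
  qed
  have "\<bar>Vpi H Q \<pi> R h s - Vpi H P \<pi> R h s\<bar> \<le> 2 * min (u h s a + (\<Sum>s'\<in>UNIV. P h s a s' * W s')) (real H)"
    using b1 b2 by linarith
  also have "\<dots> \<le> 2 * Vtstar H P u h s"
    using Vtstar_ge[OF hH, of u s a P] by (simp add: W_def)
  finally show ?case .
qed

lemma Vpi_le_H:
  assumes "validK H Q" "validR H R"
  shows "Vpi H Q \<pi> R 1 s \<le> real H"
  using Vpi_bounds[OF assms, of 1 \<pi> s] by simp

lemma final_gap:
  fixes Q P :: "nat \<Rightarrow> 's::finite \<Rightarrow> 'a::finite \<Rightarrow> 's \<Rightarrow> real"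
  assumes Q: "validK H Q" and P: "validK H P" and R: "validR H R"
    and err: "\<forall>h\<in>{1..H}. \<forall>s a V. V \<in> Vset H \<longrightarrow>
        \<bar>(\<Sum>s'\<in>UNIV. Q h s a s' * V s') - (\<Sum>s'\<in>UNIV. P h s a s' * V s')\<bar> \<le> 2 * u h s a"
    and opt: "Vstar H Q R 1 s1 - Vpi H Q \<pi> R 1 s1 \<le> eps"
  shows "Vstar H P R 1 s1 - Vpi H P \<pi> R 1 s1 \<le> 4 * Vtstar H P u 1 s1 + eps"
proof -
  have sl: "\<And>\<sigma> s. \<bar>Vpi H Q \<sigma> R 1 s - Vpi H P \<sigma> R 1 s\<bar> \<le> 2 * Vtstar H P u 1 s"
    by (rule sim_lemma[OF Q P R err]) simp
  have bddQ: "bdd_above (range (\<lambda>\<sigma>. Vpi H Q \<sigma> R 1 s1))"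
    using Vpi_le_H[OF Q R] by (auto intro!: bdd_aboveI)
  have "Vstar H P R 1 s1 \<le> Vstar H Q R 1 s1 + 2 * Vtstar H P u 1 s1"
    unfolding Vstar_def
  proof (rule cSup_least)
    show "range (\<lambda>\<pi>. Vpi H P \<pi> R 1 s1) \<noteq> {}" by simp
    fix x assume "x \<in> range (\<lambda>\<pi>. Vpi H P \<pi> R 1 s1)"
    then obtain \<sigma> where x: "x = Vpi H P \<sigma> R 1 s1" by auto
    have "Vpi H Q \<sigma> R 1 s1 \<le> Sup (range (\<lambda>\<sigma>. Vpi H Q \<sigma> R 1 s1))"
      by (rule cSup_upper[OF _ bddQ]) simp
    thus "x \<le> Sup (range (\<lambda>\<sigma>. Vpi H Q \<sigma> R 1 s1)) + 2 * Vtstar H P u 1 s1"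
      using sl[of \<sigma> s1] x by linarith
  qed
  thus ?thesis using opt sl[of \<pi> s1] by linarith
qed


lemma gen_support:
  "\<tau> \<in> set_pmf (gen P \<pi> h n s) \<Longrightarrow> fst \<tau> \<noteq> [] \<and> fst \<tau> ! 0 = s \<and> length (fst \<tau>) = Suc n \<and> length (snd \<tau>) = n"
proof (induction n arbitrary: h s \<tau>)
  case 0 then show ?case by simp
next
  case (Suc n)
  from Suc.prems obtain s' \<tau>' where "\<tau>' \<in> set_pmf (gen P \<pi> (Suc h) n s')"
     "\<tau> = (s # fst \<tau>', \<pi> h s # snd \<tau>')"
    by (auto split: prod.splits)
  with Suc.IH show ?case by auto
qed

lemma gen_step:
  fixes g :: "'s \<Rightarrow> 'a \<Rightarrow> 's \<Rightarrow> ennreal"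
  assumes "j < n" "\<forall>s a. (\<integral>\<^sup>+s'. g s a s' \<partial>measure_pmf (P (h0 + j) s a)) \<le> 1"
  shows "(\<integral>\<^sup>+\<tau>. g (fst \<tau> ! j) (snd \<tau> ! j) (fst \<tau> ! Suc j) \<partial>measure_pmf (gen P \<pi> h0 n s)) \<le> 1"
  using assms
proof (induction n arbitrary: h0 j s)
  case 0 then show ?case by simp
next
  case (Suc m)
  have "(\<integral>\<^sup>+\<tau>. g (fst \<tau> ! j) (snd \<tau> ! j) (fst \<tau> ! Suc j) \<partial>measure_pmf (gen P \<pi> h0 (Suc m) s))
     = (\<integral>\<^sup>+s'. (\<integral>\<^sup>+\<tau>. g ((s # fst \<tau>) ! j) ((\<pi> h0 s # snd \<tau>) ! j) ((s # fst \<tau>) ! Suc j)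
           \<partial>measure_pmf (gen P \<pi> (Suc h0) m s')) \<partial>measure_pmf (P h0 s (\<pi> h0 s)))"
    by (simp add: nn_integral_bind_pmf nn_integral_map_pmf split_beta)
  also have "\<dots> \<le> 1"
  proof (cases j)
    case 0
    have "(\<integral>\<^sup>+\<tau>. g ((s # fst \<tau>) ! j) ((\<pi> h0 s # snd \<tau>) ! j) ((s # fst \<tau>) ! Suc j)
           \<partial>measure_pmf (gen P \<pi> (Suc h0) m s')) = g s (\<pi> h0 s) s'" for s'
    proof -
      have "(\<integral>\<^sup>+\<tau>. g ((s # fst \<tau>) ! j) ((\<pi> h0 s # snd \<tau>) ! j) ((s # fst \<tau>) ! Suc j)
           \<partial>measure_pmf (gen P \<pi> (Suc h0) m s')) = (\<integral>\<^sup>+\<tau>. g s (\<pi> h0 s) s' \<partial>measure_pmf (gen P \<pi> (Suc h0) m s'))"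
      proof (intro nn_integral_cong_AE AE_pmfI)
        fix \<tau> assume "\<tau> \<in> set_pmf (gen P \<pi> (Suc h0) m s')"
        from gen_support[OF this] show "g ((s # fst \<tau>) ! j) ((\<pi> h0 s # snd \<tau>) ! j) ((s # fst \<tau>) ! Suc j) = g s (\<pi> h0 s) s'"
          using 0 by simp
      qed
      also have "\<dots> = g s (\<pi> h0 s) s'" by (simp add: measure_pmf.emeasure_space_1)
      finally show ?thesis .
    qed
    moreover have "(\<integral>\<^sup>+s'. g s (\<pi> h0 s) s' \<partial>measure_pmf (P h0 s (\<pi> h0 s))) \<le> 1"
      using Suc.prems(2) 0 by simp
    ultimately show ?thesis by simp
  next
    case (Suc j')
    have "(\<integral>\<^sup>+\<tau>. g ((s # fst \<tau>) ! j) ((\<pi> h0 s # snd \<tau>) ! j) ((s # fst \<tau>) ! Suc j)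
           \<partial>measure_pmf (gen P \<pi> (Suc h0) m s')) \<le> 1" for s'
    proof -
      have "j' < m" using Suc Suc.prems(1) by simp
      moreover have "\<forall>s a. (\<integral>\<^sup>+s'. g s a s' \<partial>measure_pmf (P (Suc h0 + j') s a)) \<le> 1"
        using Suc.prems(2) Suc by simp
      ultimately have "(\<integral>\<^sup>+\<tau>. g (fst \<tau> ! j') (snd \<tau> ! j') (fst \<tau> ! Suc j') \<partial>measure_pmf (gen P \<pi> (Suc h0) m s')) \<le> 1"
        by (rule Suc.IH)
      thus ?thesis using Suc by simp
    qed
    hence "(\<integral>\<^sup>+s'. (\<integral>\<^sup>+\<tau>. g ((s # fst \<tau>) ! j) ((\<pi> h0 s # snd \<tau>) ! j) ((s # fst \<tau>) ! Suc j)
           \<partial>measure_pmf (gen P \<pi> (Suc h0) m s')) \<partial>measure_pmf (P h0 s (\<pi> h0 s)))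
        \<le> (\<integral>\<^sup>+s'. 1 \<partial>measure_pmf (P h0 s (\<pi> h0 s)))"
      by (intro nn_integral_mono) auto
    thus ?thesis by (simp add: measure_pmf.emeasure_space_1)
  qed
  finally show ?case .
qed

definition Gf :: "(('s,'a) traj list \<Rightarrow> ('s,'a) traj \<Rightarrow> real) \<Rightarrow> ('s,'a) traj list \<Rightarrow> real" where
  "Gf \<Psi> hs = (\<Sum>t<length hs. \<Psi> (take t hs) (hs ! t))"

lemma Gf_snoc: "Gf \<Psi> (hs @ [\<tau>]) = Gf \<Psi> hs + \<Psi> hs \<tau>"
  unfolding Gf_def by (simp add: nth_append)

lemma explore_supermart:
  assumes "\<forall>hs. (\<integral>\<^sup>+\<tau>. ennreal (exp (\<Psi> hs \<tau>)) \<partial>measure_pmf (gen P (pol hs) 1 H s1)) \<le> 1"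
  shows "(\<integral>\<^sup>+hs. ennreal (exp (Gf \<Psi> hs)) \<partial>measure_pmf (explore P s1 H pol n hs0)) \<le> ennreal (exp (Gf \<Psi> hs0))"
proof (induction n arbitrary: hs0)
  case 0 then show ?case by simp
next
  case (Suc n)
  have "(\<integral>\<^sup>+hs. ennreal (exp (Gf \<Psi> hs)) \<partial>measure_pmf (explore P s1 H pol (Suc n) hs0))
      = (\<integral>\<^sup>+\<tau>. (\<integral>\<^sup>+hs. ennreal (exp (Gf \<Psi> hs)) \<partial>measure_pmf (explore P s1 H pol n (hs0 @ [\<tau>])))
           \<partial>measure_pmf (gen P (pol hs0) 1 H s1))"
    by (simp add: nn_integral_bind_pmf)
  also have "\<dots> \<le> (\<integral>\<^sup>+\<tau>. ennreal (exp (Gf \<Psi> hs0)) * ennreal (exp (\<Psi> hs0 \<tau>)) \<partial>measure_pmf (gen P (pol hs0) 1 H s1))"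
  proof (intro nn_integral_mono)
    fix \<tau>
    have "ennreal (exp (Gf \<Psi> (hs0 @ [\<tau>]))) = ennreal (exp (Gf \<Psi> hs0)) * ennreal (exp (\<Psi> hs0 \<tau>))"
      by (simp add: Gf_snoc exp_add ennreal_mult)
    thus "(\<integral>\<^sup>+hs. ennreal (exp (Gf \<Psi> hs)) \<partial>measure_pmf (explore P s1 H pol n (hs0 @ [\<tau>])))
       \<le> ennreal (exp (Gf \<Psi> hs0)) * ennreal (exp (\<Psi> hs0 \<tau>))"
      using Suc.IH[of "hs0 @ [\<tau>]"] by simp
  qed
  also have "\<dots> = ennreal (exp (Gf \<Psi> hs0)) * (\<integral>\<^sup>+\<tau>. ennreal (exp (\<Psi> hs0 \<tau>)) \<partial>measure_pmf (gen P (pol hs0) 1 H s1))"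
    by (simp add: nn_integral_cmult)
  also have "\<dots> \<le> ennreal (exp (Gf \<Psi> hs0)) * 1"
    using assms by (intro mult_left_mono) auto
  finally show ?case by simp
qed

lemma explore_length:
  "hs \<in> set_pmf (explore P s1 H pol n hs0) \<Longrightarrow> length hs = length hs0 + n"
proof (induction n arbitrary: hs0)
  case 0 then show ?case by simp
next
  case (Suc n)
  then obtain \<tau> where "hs \<in> set_pmf (explore P s1 H pol n (hs0 @ [\<tau>]))" by auto
  from Suc.IH[OF this] show ?case by simp
qed


lemma hoeff_pos:
  fixes p :: "'s::finite pmf"
  assumes "\<forall>s'. lo \<le> W s' \<and> W s' \<le> hi" "c > 0"
  shows "(\<integral>\<^sup>+s'. ennreal (exp (c * (W s' - (\<Sum>x\<in>UNIV. pmf p x * W x)))) \<partial>measure_pmf p)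
          \<le> ennreal (exp (c\<^sup>2 * (hi - lo)\<^sup>2 / 8))"
proof -
  interpret interval_bounded_random_variable "measure_pmf p" W lo hi
    by unfold_locales (use assms in auto)
  have e: "measure_pmf.expectation p W = (\<Sum>x\<in>UNIV. pmf p x * W x)"
    by (subst integral_measure_pmf_real[of UNIV]) (auto simp: mult.commute)
  show ?thesis using Hoeffdings_lemma_nn_integral[OF assms(2)] by (simp add: e)
qed

lemma hoeff_step:
  fixes p :: "'s::finite pmf"
  assumes V: "\<forall>s'. 0 \<le> V s' \<and> V s' \<le> real H" and m: "m = (\<Sum>x\<in>UNIV. pmf p x * V x)"
  shows "(\<integral>\<^sup>+s'. ennreal (exp (c * (V s' - m) - (real H)\<^sup>2 / 8 * c\<^sup>2)) \<partial>measure_pmf p) \<le> 1"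
proof -
  have split: "(\<integral>\<^sup>+s'. ennreal (exp (c * (V s' - m) - (real H)\<^sup>2 / 8 * c\<^sup>2)) \<partial>measure_pmf p)
     = ennreal (exp (- (real H)\<^sup>2 / 8 * c\<^sup>2)) * (\<integral>\<^sup>+s'. ennreal (exp (c * (V s' - m))) \<partial>measure_pmf p)"
  proof -
    have "\<And>s'. ennreal (exp (c * (V s' - m) - (real H)\<^sup>2 / 8 * c\<^sup>2))
        = ennreal (exp (- (real H)\<^sup>2 / 8 * c\<^sup>2)) * ennreal (exp (c * (V s' - m)))"
      by (subst ennreal_mult'[symmetric]) (simp_all add: exp_add[symmetric])
    hence "(\<integral>\<^sup>+s'. ennreal (exp (c * (V s' - m) - (real H)\<^sup>2 / 8 * c\<^sup>2)) \<partial>measure_pmf p)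
      = (\<integral>\<^sup>+s'. ennreal (exp (- (real H)\<^sup>2 / 8 * c\<^sup>2)) * ennreal (exp (c * (V s' - m))) \<partial>measure_pmf p)"
      by presburger
    also have "\<dots> = ennreal (exp (- (real H)\<^sup>2 / 8 * c\<^sup>2)) * (\<integral>\<^sup>+s'. ennreal (exp (c * (V s' - m))) \<partial>measure_pmf p)"
      by (rule nn_integral_cmult) simp
    finally show ?thesis .
  qed
  have b: "(\<integral>\<^sup>+s'. ennreal (exp (c * (V s' - m))) \<partial>measure_pmf p) \<le> ennreal (exp (c\<^sup>2 * (real H)\<^sup>2 / 8))"
  proof (cases c "0::real" rule: linorder_cases)
    case less
    have W: "\<forall>s'. - real H \<le> - V s' \<and> - V s' \<le> 0" using V by auto
    have "(\<integral>\<^sup>+s'. ennreal (exp ((-c) * ((- V s') - (\<Sum>x\<in>UNIV. pmf p x * (- V x))))) \<partial>measure_pmf p)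
          \<le> ennreal (exp ((-c)\<^sup>2 * (0 - (- real H))\<^sup>2 / 8))"
      by (rule hoeff_pos[OF W]) (use less in simp)
    moreover have "(\<Sum>x\<in>UNIV. pmf p x * (- V x)) = - m" by (simp add: m sum_negf)
    moreover have "\<And>s'. (-c) * ((- V s') - (- m)) = c * (V s' - m)" by (simp add: algebra_simps)
    moreover have "(-c)\<^sup>2 * (0 - (- real H))\<^sup>2 / 8 = c\<^sup>2 * (real H)\<^sup>2 / 8" by simp
    ultimately show ?thesis by simp
  next
    case equal then show ?thesis by (simp add: measure_pmf.emeasure_space_1)
  next
    case greater
    have "(\<integral>\<^sup>+s'. ennreal (exp (c * (V s' - (\<Sum>x\<in>UNIV. pmf p x * V x)))) \<partial>measure_pmf p)
          \<le> ennreal (exp (c\<^sup>2 * (real H - 0)\<^sup>2 / 8))"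
      by (rule hoeff_pos[OF V greater])
    then show ?thesis by (simp add: m)
  qed
  have "(\<integral>\<^sup>+s'. ennreal (exp (c * (V s' - m) - (real H)\<^sup>2 / 8 * c\<^sup>2)) \<partial>measure_pmf p)
     \<le> ennreal (exp (- (real H)\<^sup>2 / 8 * c\<^sup>2)) * ennreal (exp (c\<^sup>2 * (real H)\<^sup>2 / 8))"
    unfolding split by (intro mult_left_mono b) auto
  also have "\<dots> = ennreal (exp (- (real H)\<^sup>2 / 8 * c\<^sup>2) * exp (c\<^sup>2 * (real H)\<^sup>2 / 8))"
    by (rule ennreal_mult'[symmetric]) simp
  also have "exp (- (real H)\<^sup>2 / 8 * c\<^sup>2) * exp (c\<^sup>2 * (real H)\<^sup>2 / 8) = exp (- (real H)\<^sup>2 / 8 * c\<^sup>2 + c\<^sup>2 * (real H)\<^sup>2 / 8)"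
    by (rule exp_add[symmetric])
  also have "- (real H)\<^sup>2 / 8 * c\<^sup>2 + c\<^sup>2 * (real H)\<^sup>2 / 8 = 0" by (simp add: algebra_simps)
  finally show ?thesis by simp
qed


lemma Gram_prefix:
  assumes "\<forall>i\<in>{1..n}. st hs i h = st hs' i h \<and> ac hs i h = ac hs' i h"
  shows "Gram phi H lam hs h n = Gram phi H lam hs' h n"
  using assms by (induction n) auto

lemma st_take: "i \<le> t \<Longrightarrow> 1 \<le> i \<Longrightarrow> st (take t hs) i h = st hs i h"
  by (simp add: st_def)
lemma ac_take: "i \<le> t \<Longrightarrow> 1 \<le> i \<Longrightarrow> ac (take t hs) i h = ac hs i h"
  by (simp add: ac_def)

lemma Gram_take: "Gram phi H lam (take t hs) h t = Gram phi H lam hs h t"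
  by (rule Gram_prefix) (auto simp: st_take ac_take)

lemma sum_shift_if: "(\<Sum>t<K. if Suc t < K then f (Suc t) else 0) = (\<Sum>t\<in>{1..<K}. (f t :: real))"
proof -
  have "(\<Sum>t<K. if Suc t < K then f (Suc t) else 0) = (\<Sum>t\<in>{t. t < K \<and> Suc t < K}. f (Suc t))"
    by (simp add: sum.If_cases Int_def)
  also have "{t. t < K \<and> Suc t < K} = {..<K - 1}" by auto
  also have "(\<Sum>t\<in>{..<K - 1}. f (Suc t)) = (\<Sum>t\<in>{1..<K}. f t)"
  proof -
    have "{1..<K} = Suc ` {..<K - 1}"
    proof (cases K)
      case 0 then show ?thesis by simp
    next
      case (Suc m) then show ?thesis by (simp add: image_Suc_lessThan atLeastLessThanSuc_atLeastAtMost)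
    qed
    thus ?thesis by (simp add: sum.reindex)
  qed
  finally show ?thesis .
qed


locale expl =
  fixes phi :: "'s::finite \<Rightarrow> 'a::finite \<Rightarrow> 's \<Rightarrow> real^'d"
    and H :: nat and lam :: real and theta :: "nat \<Rightarrow> real^'d"
    and P :: "nat \<Rightarrow> 's \<Rightarrow> 'a \<Rightarrow> 's pmf" and K :: nat
  assumes H: "H \<ge> 1" and K: "K \<ge> 1" and lam: "lam > 0"
    and feat: "\<forall>s a V. (\<forall>s'. 0 \<le> V s' \<and> V s' \<le> 1) \<longrightarrow> norm (featV phi s a V) \<le> 1"
    and P_lin: "\<forall>h\<in>{1..H}. \<forall>s a s'. pmf (P h s a) s' = theta h \<bullet> phi s a s'"
begin

definition Vt where "Vt hs h t = Vsel phi H (Gram phi H lam hs h (t - 1)) (st hs t h) (ac hs t h)"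
definition ph where "ph hs h t = phit phi H lam hs h t"
definition eta where "eta hs h t = Vt hs h t (st hs t (Suc h)) - theta h \<bullet> ph hs h t"
definition Sv where "Sv hs h = (\<Sum>t\<in>{1..<K}. eta hs h t *\<^sub>R ph hs h t)"
definition psi where "psi h x M s a s' =
   (x \<bullet> phiK phi H M s a) * (Vsel phi H M s a s' - theta h \<bullet> phiK phi H M s a)
     - (real H)\<^sup>2 / 8 * (x \<bullet> phiK phi H M s a)\<^sup>2"
definition Psi where "Psi h x hs \<tau> = (if Suc (length hs) < K then
   psi h x (Gram phi H lam hs h (length hs)) (fst \<tau> ! (h - 1)) (snd \<tau> ! (h - 1)) (fst \<tau> ! h) else 0)"

lemma mean:
  assumes "h \<in> {1..H}"
  shows "theta h \<bullet> featV phi s a V = (\<Sum>s'\<in>UNIV. pmf (P h s a) s' * V s')"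
  using P_lin assms by (simp add: inner_featV)

lemma Vsel_in: "\<forall>s'. 0 \<le> Vsel phi H M s a s' \<and> Vsel phi H M s a s' \<le> real H"
  using Vsel_spec(1)[of phi H M s a] by (simp add: Vset_def)

lemma Psi_step:
  assumes h: "h \<in> {1..H}"
  shows "(\<integral>\<^sup>+\<tau>. ennreal (exp (Psi h x hs \<tau>)) \<partial>measure_pmf (gen P \<pi> 1 H s1)) \<le> 1"
proof (cases "Suc (length hs) < K")
  case False
  then show ?thesis by (simp add: Psi_def measure_pmf.emeasure_space_1)
next
  case True
  define M where "M = Gram phi H lam hs h (length hs)"
  have "(\<integral>\<^sup>+\<tau>. (\<lambda>s a s'. ennreal (exp (psi h x M s a s'))) (fst \<tau> ! (h - 1)) (snd \<tau> ! (h - 1)) (fst \<tau> ! Suc (h - 1))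
         \<partial>measure_pmf (gen P \<pi> 1 H s1)) \<le> 1"
  proof (rule gen_step)
    show "h - 1 < H" using h by auto
    show "\<forall>s a. (\<integral>\<^sup>+s'. ennreal (exp (psi h x M s a s')) \<partial>measure_pmf (P (1 + (h - 1)) s a)) \<le> 1"
    proof (intro allI)
      fix s a
      have hh: "1 + (h - 1) = h" using h by auto
      have m: "theta h \<bullet> phiK phi H M s a = (\<Sum>s'\<in>UNIV. pmf (P h s a) s' * Vsel phi H M s a s')"
        unfolding phiK_def by (rule mean[OF h])
      show "(\<integral>\<^sup>+s'. ennreal (exp (psi h x M s a s')) \<partial>measure_pmf (P (1 + (h - 1)) s a)) \<le> 1"
        unfolding hh psi_def by (rule hoeff_step[OF Vsel_in m])
    qed
  qed
  moreover have "Suc (h - 1) = h" "h - 1 + 1 = h" using h by auto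
  ultimately show ?thesis using True by (simp add: Psi_def M_def)
qed

lemma Gf_eq:
  assumes "length hs = K"
  shows "Gf (Psi h x) hs = x \<bullet> Sv hs h - (real H)\<^sup>2 / 8 * (\<Sum>t\<in>{1..<K}. (x \<bullet> ph hs h t)\<^sup>2)"
proof -
  have "Gf (Psi h x) hs = (\<Sum>t<K. if Suc t < K then
      (\<lambda>t. (x \<bullet> ph hs h t) * eta hs h t - (real H)\<^sup>2 / 8 * (x \<bullet> ph hs h t)\<^sup>2) (Suc t) else 0)"
    unfolding Gf_def assms
  proof (rule sum.cong[OF refl])
    fix t assume t: "t \<in> {..<K}"
    have "fst (hs ! t) ! (h - 1) = st hs (Suc t) h" "snd (hs ! t) ! (h - 1) = ac hs (Suc t) h"
      "fst (hs ! t) ! h = st hs (Suc t) (Suc h)"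
      by (simp_all add: st_def ac_def)
    moreover have "length (take t hs) = t" using t assms by simp
    ultimately show "Psi h x (take t hs) (hs ! t) = (if Suc t < K then
      (\<lambda>t. (x \<bullet> ph hs h t) * eta hs h t - (real H)\<^sup>2 / 8 * (x \<bullet> ph hs h t)\<^sup>2) (Suc t) else 0)"
      by (simp add: Psi_def psi_def Gram_take ph_def phit_def eta_def Vt_def)
  qed
  also have "\<dots> = (\<Sum>t\<in>{1..<K}. (x \<bullet> ph hs h t) * eta hs h t - (real H)\<^sup>2 / 8 * (x \<bullet> ph hs h t)\<^sup>2)"
    by (rule sum_shift_if)
  also have "\<dots> = x \<bullet> Sv hs h - (real H)\<^sup>2 / 8 * (\<Sum>t\<in>{1..<K}. (x \<bullet> ph hs h t)\<^sup>2)"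
    by (simp add: Sv_def inner_sum_right sum_subtractf sum_distrib_left mult.commute)
  finally show ?thesis .
qed

lemma tail_bound:
  assumes h: "h \<in> {1..H}"
  shows "measure_pmf.prob (explore P s1 H pol K []) {hs. L \<le> Gf (Psi h x) hs} \<le> exp (- L)"
proof -
  let ?M = "measure_pmf (explore P s1 H pol K [])"
  have int: "(\<integral>\<^sup>+hs. ennreal (exp (Gf (Psi h x) hs)) \<partial>?M) \<le> ennreal (exp (Gf (Psi h x) []))"
    by (rule explore_supermart) (use Psi_step[OF h] in auto)
  have "emeasure ?M {hs. L \<le> Gf (Psi h x) hs} = (\<integral>\<^sup>+hs. indicator {hs. L \<le> Gf (Psi h x) hs} hs \<partial>?M)"
    by simp
  also have "\<dots> \<le> (\<integral>\<^sup>+hs. ennreal (exp (- L)) * ennreal (exp (Gf (Psi h x) hs)) \<partial>?M)"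
  proof (intro nn_integral_mono)
    fix hs
    show "indicator {hs. L \<le> Gf (Psi h x) hs} hs \<le> ennreal (exp (- L)) * ennreal (exp (Gf (Psi h x) hs))"
    proof (cases "L \<le> Gf (Psi h x) hs")
      case True
      have "1 \<le> exp (- L) * exp (Gf (Psi h x) hs)" using True by (simp add: exp_add[symmetric])
      hence "ennreal 1 \<le> ennreal (exp (- L) * exp (Gf (Psi h x) hs))" by (rule ennreal_leI)
      thus ?thesis using True by (simp add: ennreal_mult'[symmetric])
    qed simp
  qed
  also have "\<dots> = ennreal (exp (- L)) * (\<integral>\<^sup>+hs. ennreal (exp (Gf (Psi h x) hs)) \<partial>?M)"
    by (rule nn_integral_cmult) simp
  also have "\<dots> \<le> ennreal (exp (- L)) * ennreal (exp (Gf (Psi h x) []))"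
    by (intro mult_left_mono int) simp
  also have "\<dots> = ennreal (exp (- L))" by (simp add: Gf_def)
  finally have "ennreal (measure_pmf.prob (explore P s1 H pol K []) {hs. L \<le> Gf (Psi h x) hs}) \<le> ennreal (exp (- L))"
    by (simp add: measure_pmf.emeasure_eq_measure)
  thus ?thesis by (simp add: ennreal_le_iff)
qed

end


context expl
begin

definition GK where "GK hs h = Gram phi H lam hs h (K - 1)"

lemma K_set: "{1..K - 1} = {1..<K}" using K by auto

lemma GK_form: "v \<bullet> (GK hs h *v u) = lam * (v \<bullet> u) + (\<Sum>t\<in>{1..<K}. (ph hs h t \<bullet> v) * (ph hs h t \<bullet> u))"
  unfolding GK_def Gram_form K_set ph_def ..

lemma GK_sym: "v \<bullet> (GK hs h *v u) = u \<bullet> (GK hs h *v v)"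
  unfolding GK_def by (rule Gram_sym)

lemma GK_lower: "lam * (u \<bullet> u) \<le> u \<bullet> (GK hs h *v u)"
  unfolding GK_def by (rule Gram_lower)

lemma GK_psd: "0 \<le> u \<bullet> (GK hs h *v u)"
  unfolding GK_def by (rule Gram_psd) (use lam in simp)

lemma GK_inv: "GK hs h *v (matrix_inv (GK hs h) *v f) = f" "matrix_inv (GK hs h) *v (GK hs h *v f) = f"
  unfolding GK_def by (rule Gram_inv_vec[OF lam])+

lemma ph_norm: "norm (ph hs h t) \<le> real H"
  unfolding ph_def phit_def phiK_def by (rule featV_norm[OF feat H Vsel_spec(1)])

lemma eta_abs: assumes "h \<in> {1..H}" shows "\<bar>eta hs h t\<bar> \<le> real H"
proof -
  define M where "M = Gram phi H lam hs h (t - 1)"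
  define s where "s = st hs t h"
  define a where "a = ac hs t h"
  have m: "theta h \<bullet> ph hs h t = (\<Sum>s'\<in>UNIV. pmf (P h s a) s' * Vsel phi H M s a s')"
    unfolding ph_def phit_def phiK_def M_def s_def a_def by (rule mean[OF assms])
  have k: "\<forall>s'. 0 \<le> pmf (P h s a) s'" "(\<Sum>s'\<in>UNIV. pmf (P h s a) s') = 1"
    by (auto simp: sum_pmf_eq_1)
  note b = sum_kernel_bounds[OF k Vsel_in[of M s a]]
  have "0 \<le> Vt hs h t (st hs t (Suc h))" "Vt hs h t (st hs t (Suc h)) \<le> real H"
    using Vsel_in unfolding Vt_def by auto
  thus ?thesis using b m unfolding eta_def Vt_def M_def s_def a_def by auto
qed

lemma Sv_norm: assumes "h \<in> {1..H}" shows "norm (Sv hs h) \<le> real (K - 1) * (real H * real H)"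
proof -
  have "norm (Sv hs h) \<le> (\<Sum>t\<in>{1..<K}. norm (eta hs h t *\<^sub>R ph hs h t))"
    unfolding Sv_def by (rule norm_sum)
  also have "\<dots> \<le> (\<Sum>t\<in>{1..<K}. real H * real H)"
    by (intro sum_mono) (auto intro!: mult_mono eta_abs[OF assms] ph_norm)
  finally show ?thesis by simp
qed

definition wv where "wv hs h = matrix_inv (GK hs h) *v Sv hs h"

lemma GK_w: "GK hs h *v wv hs h = Sv hs h"
  unfolding wv_def by (rule GK_inv(1))

lemma wS_eq: "wv hs h \<bullet> Sv hs h = wv hs h \<bullet> (GK hs h *v wv hs h)"
  by (simp add: GK_w)

lemma wS_lower: "lam * (wv hs h \<bullet> wv hs h) \<le> wv hs h \<bullet> Sv hs h"
  unfolding wS_eq by (rule GK_lower)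

lemma w_norm: "norm (wv hs h) \<le> norm (Sv hs h) / lam"
proof -
  have "lam * (norm (wv hs h))\<^sup>2 \<le> norm (wv hs h) * norm (Sv hs h)"
    using wS_lower[of hs h] Cauchy_Schwarz_ineq2[of "wv hs h" "Sv hs h"]
    by (simp add: power2_norm_eq_inner)
  hence "lam * norm (wv hs h) \<le> norm (Sv hs h)" if "norm (wv hs h) > 0"
    using that by (simp add: power2_eq_square mult.assoc[symmetric])
  hence "lam * norm (wv hs h) \<le> norm (Sv hs h)" by (cases "norm (wv hs h) > 0") auto
  thus ?thesis using lam by (simp add: field_simps)
qed

lemma w_var: "wv hs h \<bullet> Sv hs h = 2 * (z \<bullet> Sv hs h) - z \<bullet> (GK hs h *v z) + (z - wv hs h) \<bullet> (GK hs h *v (z - wv hs h))"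
proof -
  have s: "wv hs h \<bullet> (GK hs h *v z) = z \<bullet> Sv hs h"
    using GK_sym[of "wv hs h" hs h z] by (simp add: GK_w)
  show ?thesis
    by (simp add: matrix_vector_mult_diff_distrib inner_diff_left inner_diff_right GK_w s inner_commute)
qed

lemma caseA: assumes "h \<in> {1..H}" shows "wv hs h \<bullet> Sv hs h \<le> real (K - 1) * (real H * real H)"
proof -
  let ?w = "wv hs h"
  have "?w \<bullet> Sv hs h = 2 * (?w \<bullet> Sv hs h) - ?w \<bullet> (GK hs h *v ?w)"
    using wS_eq[of hs h] by simp
  also have "\<dots> = (\<Sum>t\<in>{1..<K}. 2 * eta hs h t * (ph hs h t \<bullet> ?w) - (ph hs h t \<bullet> ?w)\<^sup>2) - lam * (?w \<bullet> ?w)"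
    by (simp add: GK_form Sv_def inner_sum_right sum_subtractf sum_distrib_left power2_eq_square
        inner_commute mult.assoc)
  also have "\<dots> \<le> (\<Sum>t\<in>{1..<K}. (eta hs h t)\<^sup>2)"
  proof -
    have "(\<Sum>t\<in>{1..<K}. 2 * eta hs h t * (ph hs h t \<bullet> ?w) - (ph hs h t \<bullet> ?w)\<^sup>2) \<le> (\<Sum>t\<in>{1..<K}. (eta hs h t)\<^sup>2)"
    proof (intro sum_mono)
      fix t
      have "0 \<le> (eta hs h t - ph hs h t \<bullet> ?w)\<^sup>2" by simp
      thus "2 * eta hs h t * (ph hs h t \<bullet> ?w) - (ph hs h t \<bullet> ?w)\<^sup>2 \<le> (eta hs h t)\<^sup>2"
        by (simp add: power2_eq_square algebra_simps)
    qed
    moreover have "0 \<le> lam * (?w \<bullet> ?w)" using lam by simp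
    ultimately show ?thesis by linarith
  qed
  also have "\<dots> \<le> (\<Sum>t\<in>{1..<K}. real H * real H)"
  proof (intro sum_mono)
    fix t
    have "\<bar>eta hs h t\<bar> \<le> real H" by (rule eta_abs[OF assms])
    hence "\<bar>eta hs h t\<bar> * \<bar>eta hs h t\<bar> \<le> real H * real H" by (intro mult_mono) auto
    thus "(eta hs h t)\<^sup>2 \<le> real H * real H" by (simp add: power2_eq_square)
  qed
  finally show ?thesis by simp
qed

end


context expl
begin

lemma Lam_K: "Lam phi H lam hs K h = GK hs h"
  by (simp add: Lam_def GK_def)

lemma thetahat_eq:
  "thetahat phi H lam hs K h - theta h = wv hs h - lam *\<^sub>R (matrix_inv (GK hs h) *v theta h)"
proof -
  define Y where "Y = (\<Sum>t\<in>{1..<K}. Vt hs h t (st hs t (Suc h)) *\<^sub>R ph hs h t)"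
  have th: "thetahat phi H lam hs K h = matrix_inv (GK hs h) *v Y"
    by (simp add: thetahat_def Y_def Vt_def ph_def phit_def Lam_def GK_def)
  have Gt: "GK hs h *v theta h = lam *\<^sub>R theta h + (\<Sum>t\<in>{1..<K}. (ph hs h t \<bullet> theta h) *\<^sub>R ph hs h t)"
    unfolding GK_def Gram_mult K_set ph_def ..
  have "Y - GK hs h *v theta h = Sv hs h - lam *\<^sub>R theta h"
    unfolding Gt Y_def Sv_def eta_def
    by (simp add: scaleR_diff_left sum_subtractf inner_commute algebra_simps)
  hence "matrix_inv (GK hs h) *v (Y - GK hs h *v theta h) = wv hs h - lam *\<^sub>R (matrix_inv (GK hs h) *v theta h)"
    by (simp add: wv_def matrix_vector_mult_diff_distrib matrix_vector_mult_scaleR)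
  thus ?thesis by (simp add: th matrix_vector_mult_diff_distrib GK_inv)
qed

lemma wnorm_w: "wnorm (wv hs h) (GK hs h) = sqrt (wv hs h \<bullet> Sv hs h)"
  by (simp add: wnorm_def GK_w)

lemma wnorm_reg: "wnorm (- (lam *\<^sub>R (matrix_inv (GK hs h) *v th))) (GK hs h) \<le> sqrt lam * norm th"
proof -
  define v where "v = matrix_inv (GK hs h) *v th"
  have Gv: "GK hs h *v v = th" by (simp add: v_def GK_inv)
  have "lam * (v \<bullet> v) \<le> v \<bullet> th" using GK_lower[of v hs h] by (simp add: Gv)
  also have "\<dots> \<le> norm v * norm th" by (rule norm_cauchy_schwarz)
  finally have a: "lam * (norm v)\<^sup>2 \<le> norm v * norm th" by (simp add: power2_norm_eq_inner)
  have nv: "lam * norm v \<le> norm th"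
  proof (cases "norm v > 0")
    case True thus ?thesis using a by (simp add: power2_eq_square mult.assoc[symmetric])
  qed (use lam in auto)
  have "(- (lam *\<^sub>R v)) \<bullet> (GK hs h *v (- (lam *\<^sub>R v))) = lam * lam * (v \<bullet> th)"
    by (simp add: matrix_vector_mult_scaleR Gv vec.neg)
  also have "\<dots> \<le> lam * lam * (norm v * norm th)"
    using lam by (intro mult_left_mono norm_cauchy_schwarz) auto
  also have "\<dots> = lam * ((lam * norm v) * norm th)" by simp
  also have "\<dots> \<le> lam * (norm th * norm th)"
    using lam nv by (intro mult_left_mono mult_right_mono) auto
  also have "\<dots> = (sqrt lam * norm th)\<^sup>2"
    using lam by (simp add: power_mult_distrib power2_eq_square)
  finally have "(- (lam *\<^sub>R v)) \<bullet> (GK hs h *v (- (lam *\<^sub>R v))) \<le> (sqrt lam * norm th)\<^sup>2" .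
  hence "wnorm (- (lam *\<^sub>R v)) (GK hs h) \<le> sqrt ((sqrt lam * norm th)\<^sup>2)"
    unfolding wnorm_def by (rule real_sqrt_le_mono)
  thus ?thesis using lam by (simp add: v_def)
qed

lemma thetahat_err:
  "wnorm (thetahat phi H lam hs K h - theta h) (GK hs h) \<le> sqrt (wv hs h \<bullet> Sv hs h) + sqrt lam * norm (theta h)"
proof -
  have "wnorm (thetahat phi H lam hs K h - theta h) (GK hs h)
      = wnorm (wv hs h + - (lam *\<^sub>R (matrix_inv (GK hs h) *v theta h))) (GK hs h)"
    by (simp add: thetahat_eq)
  also have "\<dots> \<le> wnorm (wv hs h) (GK hs h) + wnorm (- (lam *\<^sub>R (matrix_inv (GK hs h) *v theta h))) (GK hs h)"
    by (rule psd_triangle[OF GK_sym GK_psd])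
  also have "\<dots> \<le> sqrt (wv hs h \<bullet> Sv hs h) + sqrt lam * norm (theta h)"
    using wnorm_reg[of hs h "theta h"] by (simp add: wnorm_w)
  finally show ?thesis .
qed

lemma err_bound:
  assumes h: "h \<in> {1..H}" and V: "V \<in> Vset H"
    and c1: "wnorm (tt - thetahat phi H lam hs K h) (GK hs h) \<le> beta"
    and c2: "wnorm (thetahat phi H lam hs K h - theta h) (GK hs h) \<le> beta"
  shows "\<bar>(\<Sum>s'\<in>UNIV. (tt \<bullet> phi s a s') * V s') - (\<Sum>s'\<in>UNIV. pmf (P h s a) s' * V s')\<bar>
          \<le> 2 * bonus phi H lam beta hs K h s a"
proof -
  define f where "f = featV phi s a V"
  define u where "u = matrix_inv (GK hs h) *v f"
  have Gu: "GK hs h *v u = f" by (simp add: u_def GK_inv)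
  have lhs: "(\<Sum>s'\<in>UNIV. (tt \<bullet> phi s a s') * V s') - (\<Sum>s'\<in>UNIV. pmf (P h s a) s' * V s') = (tt - theta h) \<bullet> (GK hs h *v u)"
  proof -
    have "(tt - theta h) \<bullet> (GK hs h *v u) = tt \<bullet> f - theta h \<bullet> f" by (simp add: Gu inner_diff_left)
    moreover have "theta h \<bullet> f = (\<Sum>s'\<in>UNIV. pmf (P h s a) s' * V s')" unfolding f_def by (rule mean[OF h])
    moreover have "tt \<bullet> f = (\<Sum>s'\<in>UNIV. (tt \<bullet> phi s a s') * V s')" unfolding f_def by (rule inner_featV)
    ultimately show ?thesis by simp
  qed
  have cs: "\<bar>(tt - theta h) \<bullet> (GK hs h *v u)\<bar> \<le> wnorm (tt - theta h) (GK hs h) * wnorm u (GK hs h)"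
    using psd_cs[OF GK_sym GK_psd] by (simp add: wnorm_def)
  have wu: "wnorm u (GK hs h) = wnorm f (matrix_inv (GK hs h))"
  proof -
    have "u \<bullet> (GK hs h *v u) = f \<bullet> (matrix_inv (GK hs h) *v f)"
      by (simp add: Gu) (simp add: u_def inner_commute)
    thus ?thesis by (simp add: wnorm_def)
  qed
  have tri: "wnorm (tt - theta h) (GK hs h) \<le> 2 * beta"
  proof -
    have "wnorm (tt - theta h) (GK hs h) = wnorm ((tt - thetahat phi H lam hs K h) + (thetahat phi H lam hs K h - theta h)) (GK hs h)"
      by simp
    also have "\<dots> \<le> wnorm (tt - thetahat phi H lam hs K h) (GK hs h) + wnorm (thetahat phi H lam hs K h - theta h) (GK hs h)"
      by (rule psd_triangle[OF GK_sym GK_psd])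
    finally show ?thesis using c1 c2 by simp
  qed
  have sel: "wnorm f (matrix_inv (GK hs h)) \<le> wnorm (phiK phi H (GK hs h) s a) (matrix_inv (GK hs h))"
    unfolding f_def by (rule Vsel_spec(2)[OF V])
  have "\<bar>(tt - theta h) \<bullet> (GK hs h *v u)\<bar> \<le> 2 * beta * wnorm (phiK phi H (GK hs h) s a) (matrix_inv (GK hs h))"
    using cs wu tri sel
    by (smt (verit, best) GK_psd mult_mono wnorm_nonneg)
  thus ?thesis unfolding lhs by (simp add: bonus_def Lam_K)
qed

end


definition grid :: "real \<Rightarrow> nat \<Rightarrow> real set" where
  "grid eps J = (\<lambda>j. eps * of_int j) ` {- int J..int J}"

definition netset :: "real \<Rightarrow> nat \<Rightarrow> (real^'d) set" where
  "netset eps J = {z. \<forall>i. z $ i \<in> grid eps J}"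

lemma grid_finite: "finite (grid eps J)" and grid_card: "card (grid eps J) \<le> 2 * J + 1"
proof -
  show "finite (grid eps J)" by (simp add: grid_def)
  have "card (grid eps J) \<le> card {- int J..int J}" unfolding grid_def by (rule card_image_le) simp
  also have "\<dots> = 2 * J + 1" by simp
  finally show "card (grid eps J) \<le> 2 * J + 1" .
qed

lemma netset_eq: "netset eps J = (\<lambda>f. \<chi> i. f i) ` (PiE UNIV (\<lambda>_. grid eps J))"
proof (intro set_eqI iffI)
  fix z :: "real^'d" assume "z \<in> netset eps J"
  hence "(\<lambda>i. z $ i) \<in> PiE UNIV (\<lambda>_. grid eps J)" by (auto simp: netset_def)
  moreover have "z = (\<chi> i. z $ i)" by simp
  ultimately show "z \<in> (\<lambda>f. \<chi> i. f i) ` (PiE UNIV (\<lambda>_. grid eps J))" by blast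
next
  fix z :: "real^'d" assume "z \<in> (\<lambda>f. \<chi> i. f i) ` (PiE UNIV (\<lambda>_. grid eps J))"
  thus "z \<in> netset eps J" by (auto simp: netset_def PiE_def Pi_def)
qed

lemma netset_finite: "finite (netset eps J :: (real^'d) set)"
  unfolding netset_eq by (intro finite_imageI finite_PiE grid_finite) simp

lemma netset_card: "card (netset eps J :: (real^'d) set) \<le> (2 * J + 1) ^ CARD('d)"
proof -
  have "card (netset eps J :: (real^'d) set) \<le> card (PiE (UNIV::'d set) (\<lambda>_. grid eps J))"
    unfolding netset_eq by (rule card_image_le) (intro finite_PiE grid_finite, simp)
  also have "\<dots> = card (grid eps J) ^ CARD('d)" by (simp add: card_PiE)
  also have "\<dots> \<le> (2 * J + 1) ^ CARD('d)" by (intro power_mono grid_card) simp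
  finally show ?thesis .
qed

lemma netset_nonempty: "(0::real^'d) \<in> netset eps J"
  by (auto simp: netset_def grid_def image_iff intro!: bexI[of _ 0])

lemma netset_card_pos: "card (netset eps J :: (real^'d) set) > 0"
  using netset_nonempty netset_finite card_gt_0_iff by blast

lemma round_bound:
  fixes x :: real and J :: nat
  assumes "\<bar>x\<bar> \<le> real J"
  shows "round x \<in> {- int J..int J}"
proof -
  have "round x \<le> int J"
  proof -
    have "x + 1/2 < real J + 1" using assms by simp
    thus ?thesis unfolding round_def by linarith
  qed
  moreover have "- int J \<le> round x"
  proof -
    have "- real J \<le> x + 1/2" using assms by simp
    thus ?thesis unfolding round_def by linarith
  qed
  ultimately show ?thesis by simp
qed

lemma net_approx:
  fixes w :: "real^'d"
  assumes eps: "eps > 0" and nw: "norm w \<le> real J * eps"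
  shows "\<exists>z\<in>netset eps J. (z - w) \<bullet> (z - w) \<le> real CARD('d) * eps\<^sup>2 / 4"
proof -
  define z where "z = (\<chi> i. eps * of_int (round (w $ i / eps)) :: real^'d)"
  have zin: "z \<in> netset eps J"
  proof -
    have "z $ i \<in> grid eps J" for i
    proof -
      have "\<bar>w $ i\<bar> \<le> real J * eps" using component_le_norm_cart[of w i] nw by linarith
      hence "\<bar>w $ i / eps\<bar> \<le> real J" using eps by (simp add: abs_div pos_divide_le_eq)
      from round_bound[OF this] show ?thesis by (auto simp: z_def grid_def)
    qed
    thus ?thesis by (simp add: netset_def)
  qed
  have ci: "(z $ i - w $ i)\<^sup>2 \<le> eps\<^sup>2 / 4" for i
  proof -
    have "\<bar>of_int (round (w $ i / eps)) - w $ i / eps\<bar> \<le> 1/2" by (rule of_int_round_abs_le)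
    hence "\<bar>eps * (of_int (round (w $ i / eps)) - w $ i / eps)\<bar> \<le> eps * (1/2)"
      using eps by (simp add: abs_mult)
    hence "\<bar>z $ i - w $ i\<bar> \<le> eps / 2" using eps by (simp add: z_def algebra_simps)
    hence "\<bar>z $ i - w $ i\<bar>\<^sup>2 \<le> (eps / 2)\<^sup>2" by (intro power_mono) auto
    thus ?thesis by (simp add: power_divide)
  qed
  have "(z - w) \<bullet> (z - w) = (\<Sum>i\<in>UNIV. (z $ i - w $ i)\<^sup>2)"
    by (simp add: inner_vec_def power2_eq_square)
  also have "\<dots> \<le> (\<Sum>i\<in>(UNIV::'d set). eps\<^sup>2 / 4)" by (intro sum_mono ci)
  also have "\<dots> = real CARD('d) * eps\<^sup>2 / 4" by simp
  finally show ?thesis using zin by blast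
qed


context expl
begin

lemma caseB_det:
  assumes h: "h \<in> {1..H}" and len: "length hs = K"
  shows "wv hs h \<bullet> Sv hs h \<le> (real H)\<^sup>2 / 2 * Gf (Psi h ((4 / (real H)\<^sup>2) *\<^sub>R z)) hs
           + (lam + real (K - 1) * (real H)\<^sup>2) * ((z - wv hs h) \<bullet> (z - wv hs h))"
proof -
  let ?w = "wv hs h" and ?S = "Sv hs h"
  define e where "e = z - ?w"
  have H0: "real H > 0" using H by simp
  have gf: "(real H)\<^sup>2 / 2 * Gf (Psi h ((4 / (real H)\<^sup>2) *\<^sub>R z)) hs
      = 2 * (z \<bullet> ?S) - (\<Sum>t\<in>{1..<K}. (z \<bullet> ph hs h t)\<^sup>2)"
  proof -
    have "Gf (Psi h ((4 / (real H)\<^sup>2) *\<^sub>R z)) hs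
       = (4 / (real H)\<^sup>2) * (z \<bullet> ?S) - (real H)\<^sup>2 / 8 * (\<Sum>t\<in>{1..<K}. ((4 / (real H)\<^sup>2) * (z \<bullet> ph hs h t))\<^sup>2)"
      by (simp add: Gf_eq[OF len])
    also have "(\<Sum>t\<in>{1..<K}. ((4 / (real H)\<^sup>2) * (z \<bullet> ph hs h t))\<^sup>2) = (4 / (real H)\<^sup>2)\<^sup>2 * (\<Sum>t\<in>{1..<K}. (z \<bullet> ph hs h t)\<^sup>2)"
      unfolding sum_distrib_left by (rule sum.cong[OF refl]) (simp only: power_mult_distrib)
    finally show ?thesis using H0 by (simp add: field_simps power2_eq_square)
  qed
  have zGz: "z \<bullet> (GK hs h *v z) \<ge> (\<Sum>t\<in>{1..<K}. (z \<bullet> ph hs h t)\<^sup>2)"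
    using lam by (simp add: GK_form power2_eq_square inner_commute)
  have eGe: "e \<bullet> (GK hs h *v e) \<le> (lam + real (K - 1) * (real H)\<^sup>2) * (e \<bullet> e)"
  proof -
    have "e \<bullet> (GK hs h *v e) = lam * (e \<bullet> e) + (\<Sum>t\<in>{1..<K}. (ph hs h t \<bullet> e)\<^sup>2)"
      by (simp add: GK_form power2_eq_square)
    also have "(\<Sum>t\<in>{1..<K}. (ph hs h t \<bullet> e)\<^sup>2) \<le> (\<Sum>t\<in>{1..<K}. (real H)\<^sup>2 * (e \<bullet> e))"
    proof (intro sum_mono)
      fix t
      have "\<bar>ph hs h t \<bullet> e\<bar> \<le> norm (ph hs h t) * norm e" by (rule Cauchy_Schwarz_ineq2)
      also have "\<dots> \<le> real H * norm e" by (intro mult_right_mono ph_norm) simp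
      finally have "\<bar>ph hs h t \<bullet> e\<bar>\<^sup>2 \<le> (real H * norm e)\<^sup>2" by (intro power_mono) auto
      thus "(ph hs h t \<bullet> e)\<^sup>2 \<le> (real H)\<^sup>2 * (e \<bullet> e)"
        by (simp add: power_mult_distrib power2_norm_eq_inner)
    qed
    finally show ?thesis using K by (simp add: algebra_simps)
  qed
  have "?w \<bullet> ?S = 2 * (z \<bullet> ?S) - z \<bullet> (GK hs h *v z) + e \<bullet> (GK hs h *v e)"
    unfolding e_def by (rule w_var)
  thus ?thesis using gf zGz eGe unfolding e_def by linarith
qed

end


lemma le_div_le1: "0 \<le> (x::real) \<Longrightarrow> 0 < y \<Longrightarrow> y \<le> 1 \<Longrightarrow> x \<le> x / y"
  by (simp add: le_divide_eq mult_left_le)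

lemma ell_ge1:
  fixes H K :: nat and lam delta :: real
  assumes "H \<ge> 1" "K \<ge> 1" "0 < lam" "lam \<le> 1" "0 < delta" "delta < 1"
  shows "1 \<le> ln (4 * real H ^ 3 * real K / lam / delta)"
proof -
  have a: "real H ^ 3 \<ge> 1" "real K \<ge> 1" using assms by simp_all
  have "1 * 1 \<le> real H ^ 3 * real K" by (rule mult_mono) (use a in auto)
  hence "4 \<le> 4 * real H ^ 3 * real K" by simp
  also have "\<dots> \<le> 4 * real H ^ 3 * real K / lam" using assms a by (intro le_div_le1) auto
  also have "\<dots> \<le> 4 * real H ^ 3 * real K / lam / delta" using assms a by (intro le_div_le1) auto
  finally have x: "4 \<le> 4 * real H ^ 3 * real K / lam / delta" .
  have "exp 1 \<le> (4::real)" using exp_le by simp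
  hence "1 \<le> ln (4::real)" by (simp add: ln_ge_iff)
  also have "\<dots> \<le> ln (4 * real H ^ 3 * real K / lam / delta)" using x by simp
  finally show ?thesis .
qed

lemma one_le_mult: "1 \<le> (a::real) \<Longrightarrow> 1 \<le> b \<Longrightarrow> 1 \<le> a * b"
  using mult_mono[of 1 a 1 b] by simp

lemma numJ:
  fixes H K :: nat and lam :: real
  assumes "H \<ge> 1" "K \<ge> 1" "0 < lam"
  shows "real (K - 1) * (real H * real H) / lam \<le> real (nat \<lceil>real K ^ 2 * real H ^ 3 / lam\<rceil>) * (1 / (real K * real H))"
proof -
  have pos: "real K > 0" "real H > 0" using assms by auto
  have c: "real K ^ 2 * real H ^ 3 / lam \<le> real (nat \<lceil>real K ^ 2 * real H ^ 3 / lam\<rceil>)"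
    by linarith
  have "real (K - 1) * (real H * real H) / lam \<le> real K * (real H * real H) / lam"
    using assms by (intro divide_right_mono mult_right_mono) auto
  also have "\<dots> = (real K ^ 2 * real H ^ 3 / lam) * (1 / (real K * real H))"
    using pos by (simp add: field_simps power2_eq_square power3_eq_cube)
  also have "\<dots> \<le> real (nat \<lceil>real K ^ 2 * real H ^ 3 / lam\<rceil>) * (1 / (real K * real H))"
    using pos by (intro mult_right_mono c) auto
  finally show ?thesis .
qed

lemma numErr:
  fixes H K d :: nat and lam ell :: real
  assumes "H \<ge> 1" "K \<ge> 1" "0 < lam" "lam \<le> 1" "1 \<le> ell" "real d * ell < real (K - 1)"
  shows "(lam + real (K - 1) * (real H)\<^sup>2) * (real d * (1 / (real K * real H))\<^sup>2 / 4) \<le> 1 / 2"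
proof -
  have pos: "real K \<ge> 1" "real H \<ge> 1" using assms by auto
  have dK: "real d \<le> real K"
  proof -
    have "real d \<le> real d * ell" using assms by (simp add: mult_le_cancel_left1)
    thus ?thesis using assms by linarith
  qed
  have a: "lam + real (K - 1) * (real H)\<^sup>2 \<le> 2 * real K * (real H)\<^sup>2"
  proof -
    have "1 \<le> real K * (real H)\<^sup>2" using pos by (intro one_le_mult one_le_power)
    moreover have "real (K - 1) \<le> real K" by simp
    hence "real (K - 1) * (real H)\<^sup>2 \<le> real K * (real H)\<^sup>2" by (intro mult_right_mono) auto
    ultimately show ?thesis using assms by linarith
  qed
  have b: "real d * (1 / (real K * real H))\<^sup>2 / 4 \<le> real K * (1 / (real K * real H))\<^sup>2 / 4"
    using dK by (intro divide_right_mono mult_right_mono) auto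
  have "(lam + real (K - 1) * (real H)\<^sup>2) * (real d * (1 / (real K * real H))\<^sup>2 / 4)
      \<le> (2 * real K * (real H)\<^sup>2) * (real K * (1 / (real K * real H))\<^sup>2 / 4)"
    using a b assms by (intro mult_mono) auto
  also have "\<dots> = 1 / 2" using pos by (simp add: field_simps power2_eq_square)
  finally show ?thesis .
qed

lemma numBudget:
  fixes H K d C J :: nat and lam delta :: real
  assumes H: "H \<ge> 1" and K: "K \<ge> 1" and d: "d \<ge> 1" and lam: "0 < lam" "lam \<le> 1"
    and del: "0 < delta" "delta < 1" and C: "1 \<le> C" "C \<le> (2 * J + 1) ^ d"
    and J: "J = nat \<lceil>real K ^ 2 * real H ^ 3 / lam\<rceil>"
  shows "ln (real H * real C / delta) + 1 \<le> 2 * real d * ln (4 * real H ^ 3 * real K / lam / delta)"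
proof -
  have pos: "real K \<ge> 1" "real H \<ge> 1" using H K by auto
  define A where "A = 5 * real K ^ 2 * real H ^ 3 / lam"
  define X where "X = 4 * real H ^ 3 * real K / lam / delta"
  define Y where "Y = 16 * real H ^ 3 / (5 * lam * delta ^ 2)"
  have KH1: "1 \<le> real K ^ 2 * real H ^ 3" using pos by (intro one_le_mult one_le_power)
  hence KH2: "1 \<le> real K ^ 2 * real H ^ 3 / lam" using lam by (simp add: le_divide_eq)
  have Jb: "real J \<le> real K ^ 2 * real H ^ 3 / lam + 1"
  proof -
    have "real J = real_of_int \<lceil>real K ^ 2 * real H ^ 3 / lam\<rceil>" unfolding J using KH2 by simp
    also have "\<dots> \<le> real K ^ 2 * real H ^ 3 / lam + 1" by (rule of_int_ceiling_le_add_one)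
    finally show ?thesis .
  qed
  have "real (2 * J + 1) \<le> A" using Jb KH2 unfolding A_def by simp
  hence CA: "real C \<le> A ^ d"
  proof -
    have "real C \<le> real ((2 * J + 1) ^ d)" using C(2) by (simp only: of_nat_le_iff)
    also have "\<dots> = real (2 * J + 1) ^ d" by (rule of_nat_power)
    also have "\<dots> \<le> A ^ d" using \<open>real (2 * J + 1) \<le> A\<close> by (intro power_mono) auto
    finally show ?thesis .
  qed
  have Apos: "A > 0" using lam pos by (simp add: A_def)
  have Xpos: "X > 0" using lam pos del by (simp add: X_def)
  have XY: "X\<^sup>2 = A * Y" using lam del pos
    by (simp add: A_def X_def Y_def field_simps power2_eq_square power3_eq_cube)
  have Y1: "exp 1 * real H / delta \<le> Y"
  proof -
    have "exp 1 * real H / delta \<le> 3 * real H / delta"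
      using exp_le del pos by (intro divide_right_mono mult_right_mono) auto
    also have "\<dots> \<le> 16 * real H ^ 3 / (5 * lam * delta ^ 2)"
    proof -
      have "3 * real H * (5 * lam * delta ^ 2) \<le> 15 * real H * delta"
      proof -
        have "lam * delta \<le> 1" using lam del by (intro mult_le_one) auto
        hence "lam * delta * delta \<le> 1 * delta" using del by (intro mult_right_mono) auto
        hence "lam * delta ^ 2 \<le> 1 * delta" by (simp add: power2_eq_square mult.assoc)
        thus ?thesis using pos by (simp add: mult.assoc mult_left_mono)
      qed
      also have "\<dots> \<le> 16 * real H ^ 3 * delta"
      proof -
        have "real H ^ 1 \<le> real H ^ 3" using pos by (intro power_increasing) auto
        hence "real H \<le> real H ^ 3" by simp
        hence "15 * real H \<le> 16 * real H ^ 3" using pos by linarith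
        thus ?thesis using del by (intro mult_right_mono) auto
      qed
      finally show ?thesis using lam del pos by (simp add: field_simps)
    qed
    finally show ?thesis by (simp add: Y_def)
  qed
  have Yge1: "1 \<le> Y"
  proof -
    have "1 \<le> exp (1::real)" by simp
    moreover have "1 \<le> real H / delta" using pos del by (simp add: le_divide_eq)
    ultimately have "1 \<le> exp 1 * (real H / delta)" by (rule one_le_mult)
    thus ?thesis using Y1 by simp
  qed
  have "exp 1 * (real H * real C / delta) \<le> exp 1 * real H / delta * A ^ d"
    using CA del pos by (simp add: field_simps mult_left_mono)
  also have "\<dots> \<le> Y * A ^ d" using Y1 Apos by (intro mult_right_mono) auto
  also have "\<dots> \<le> Y ^ d * A ^ d" using Yge1 d Apos by (intro mult_right_mono) (auto simp: one_le_power
        intro: order_trans[OF _ power_increasing[of 1 d Y]])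
  also have "\<dots> = (A * Y) ^ d" by (simp add: power_mult_distrib mult.commute)
  also have "\<dots> = X ^ (2 * d)" by (simp only: XY[symmetric] power_mult)
  finally have ineq: "exp 1 * (real H * real C / delta) \<le> X ^ (2 * d)" .
  have p: "0 < real H * real C / delta" using pos C del by simp
  have "ln (real H * real C / delta) + 1 = ln (exp 1 * (real H * real C / delta))"
    using p H C by (subst ln_mult) auto
  also have "\<dots> \<le> ln (X ^ (2 * d))"
  proof -
    have p': "0 < exp 1 * (real H * real C / delta)" by (rule mult_pos_pos[OF exp_gt_zero p])
    have x2: "0 < X ^ (2 * d)" using Xpos by simp
    show ?thesis using ln_le_cancel_iff[OF p' x2] ineq by blast
  qed
  also have "\<dots> = 2 * real d * ln X" using Xpos by (simp add: ln_realpow)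
  finally show ?thesis by (simp add: X_def)
qed


theorem lemma1:
  fixes phi :: "'s::finite \<Rightarrow> 'a::finite \<Rightarrow> 's \<Rightarrow> real^'d"
    and theta :: "nat \<Rightarrow> real^'d"
    and P :: "nat \<Rightarrow> 's \<Rightarrow> 'a \<Rightarrow> 's pmf"
    and H K :: nat and B delta eps_opt lam beta :: real and s1 :: 's
  assumes H: "H \<ge> 1" and K: "K \<ge> 1" and B: "B > 0"
    and delta: "0 < delta" "delta < 1"
    and feat: "\<forall>s a V. (\<forall>s'. 0 \<le> V s' \<and> V s' \<le> 1) \<longrightarrow> norm (featV phi s a V) \<le> 1"
    and theta_bd: "\<forall>h\<in>{1..H}. norm (theta h) \<le> B"
    and P_lin: "\<forall>h\<in>{1..H}. \<forall>s a s'. pmf (P h s a) s' = theta h \<bullet> phi s a s'"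
    and lam_def: "lam = 1 / B\<^sup>2"
    and beta_def: "beta = real H * sqrt (real CARD('d) * ln (4 * real H ^ 3 * real K / lam / delta))
                          + sqrt lam * B"
  shows "measure_pmf.prob (exploration phi H lam beta P s1 K)
     {hs. \<forall>thetat :: nat \<Rightarrow> real^'d.
        (\<forall>h\<in>{1..H}. (\<forall>s a s'. 0 \<le> thetat h \<bullet> phi s a s')
                    \<and> (\<forall>s a. (\<Sum>s'\<in>UNIV. thetat h \<bullet> phi s a s') = 1)
                    \<and> wnorm (thetat h - thetahat phi H lam hs K h) (Lam phi H lam hs K h) \<le> beta)
        \<longrightarrow> (\<forall>R \<pi>. (\<forall>h\<in>{1..H}. \<forall>s a. 0 \<le> R h s a \<and> R h s a \<le> 1)
                 \<and> Vstar H (\<lambda>h s a s'. thetat h \<bullet> phi s a s') R 1 s1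
                     - Vpi H (\<lambda>h s a s'. thetat h \<bullet> phi s a s') \<pi> R 1 s1 \<le> eps_opt
              \<longrightarrow> Vstar H (\<lambda>h s a s'. pmf (P h s a) s') R 1 s1
                     - Vpi H (\<lambda>h s a s'. pmf (P h s a) s') \<pi> R 1 s1
                  \<le> 4 * Vtstar H (\<lambda>h s a s'. pmf (P h s a) s') (bonus phi H lam beta hs K) 1 s1 + eps_opt)}
     \<ge> 1 - delta"
proof -
  have B1: "1 \<le> B"
  proof -
    obtain s :: 's and a :: 'a where True by simp
    have h1: "(1::nat) \<in> {1..H}" using H by simp
    have "1 = (\<Sum>s'\<in>UNIV. pmf (P 1 s a) s')" by (simp add: sum_pmf_eq_1)
    also have "\<dots> = (\<Sum>s'\<in>UNIV. (theta 1 \<bullet> phi s a s') * 1)" using P_lin h1 by simp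
    also have "\<dots> = theta 1 \<bullet> featV phi s a (\<lambda>_. 1)" by (simp add: inner_featV)
    also have "\<dots> \<le> norm (theta 1) * norm (featV phi s a (\<lambda>_. 1))" by (rule norm_cauchy_schwarz)
    also have "\<dots> \<le> norm (theta 1) * 1" using feat by (intro mult_left_mono) auto
    also have "\<dots> \<le> B" using theta_bd h1 by simp
    finally show ?thesis .
  qed
  have lam0: "lam > 0" using B by (simp add: lam_def)
  have lam1: "lam \<le> 1" using B1 by (simp add: lam_def power_le_one_iff one_le_power)
  have sqB: "sqrt lam * B = 1" using B by (simp add: lam_def real_sqrt_divide)
  interpret E: expl phi H lam theta P K
    by unfold_locales (use H K lam0 feat P_lin in auto)
  define d where "d = CARD('d)"
  define ell where "ell = ln (4 * real H ^ 3 * real K / lam / delta)"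
  have ell1: "1 \<le> ell" unfolding ell_def by (rule ell_ge1[OF H K lam0 lam1 delta])
  have beta_eq: "beta = real H * sqrt (real d * ell) + 1" by (simp add: beta_def d_def ell_def sqB)
  define Good where "Good = {hs. \<forall>h\<in>{1..H}. wnorm (thetahat phi H lam hs K h - theta h) (E.GK hs h) \<le> beta}"
  have suff: "wnorm (thetahat phi H lam hs K h - theta h) (E.GK hs h) \<le> beta"
    if h: "h \<in> {1..H}" and ws: "E.wv hs h \<bullet> E.Sv hs h \<le> (real H)\<^sup>2 * (real d * ell)" for hs h
  proof -
    have "wnorm (thetahat phi H lam hs K h - theta h) (E.GK hs h) \<le> sqrt (E.wv hs h \<bullet> E.Sv hs h) + sqrt lam * norm (theta h)"
      by (rule E.thetahat_err)
    also have "sqrt lam * norm (theta h) \<le> sqrt lam * B" using theta_bd h lam0 by (intro mult_left_mono) auto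
    also have "sqrt (E.wv hs h \<bullet> E.Sv hs h) \<le> sqrt ((real H)\<^sup>2 * (real d * ell))" by (rule real_sqrt_le_mono[OF ws])
    also have "\<dots> = real H * sqrt (real d * ell)" by (simp add: real_sqrt_mult)
    finally show ?thesis using sqB beta_eq by simp
  qed
  have sub: "Good \<subseteq> {hs. \<forall>thetat :: nat \<Rightarrow> real^'d.
        (\<forall>h\<in>{1..H}. (\<forall>s a s'. 0 \<le> thetat h \<bullet> phi s a s')
                    \<and> (\<forall>s a. (\<Sum>s'\<in>UNIV. thetat h \<bullet> phi s a s') = 1)
                    \<and> wnorm (thetat h - thetahat phi H lam hs K h) (Lam phi H lam hs K h) \<le> beta)
        \<longrightarrow> (\<forall>R \<pi>. (\<forall>h\<in>{1..H}. \<forall>s a. 0 \<le> R h s a \<and> R h s a \<le> 1)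
                 \<and> Vstar H (\<lambda>h s a s'. thetat h \<bullet> phi s a s') R 1 s1
                     - Vpi H (\<lambda>h s a s'. thetat h \<bullet> phi s a s') \<pi> R 1 s1 \<le> eps_opt
              \<longrightarrow> Vstar H (\<lambda>h s a s'. pmf (P h s a) s') R 1 s1
                     - Vpi H (\<lambda>h s a s'. pmf (P h s a) s') \<pi> R 1 s1
                  \<le> 4 * Vtstar H (\<lambda>h s a s'. pmf (P h s a) s') (bonus phi H lam beta hs K) 1 s1 + eps_opt)}"
  proof (intro subsetI CollectI allI impI, elim conjE)
    fix hs thetat R \<pi>
    assume G: "hs \<in> Good"
      and tc: "\<forall>h\<in>{1..H}. (\<forall>s a s'. 0 \<le> thetat h \<bullet> phi s a s')
                    \<and> (\<forall>s a. (\<Sum>s'\<in>UNIV. thetat h \<bullet> phi s a s') = 1)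
                    \<and> wnorm (thetat h - thetahat phi H lam hs K h) (Lam phi H lam hs K h) \<le> beta"
      and Rc: "\<forall>h\<in>{1..H}. \<forall>s a. 0 \<le> R h s a \<and> R h s a \<le> 1"
      and opt: "Vstar H (\<lambda>h s a s'. thetat h \<bullet> phi s a s') R 1 s1
                     - Vpi H (\<lambda>h s a s'. thetat h \<bullet> phi s a s') \<pi> R 1 s1 \<le> eps_opt"
    show "Vstar H (\<lambda>h s a s'. pmf (P h s a) s') R 1 s1
                     - Vpi H (\<lambda>h s a s'. pmf (P h s a) s') \<pi> R 1 s1
                  \<le> 4 * Vtstar H (\<lambda>h s a s'. pmf (P h s a) s') (bonus phi H lam beta hs K) 1 s1 + eps_opt"
    proof (rule final_gap[OF _ _ _ _ opt])
      show "validK H (\<lambda>h s a s'. thetat h \<bullet> phi s a s')" using tc by (simp add: validK_def)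
      show "validK H (\<lambda>h s a s'. pmf (P h s a) s')" by (simp add: validK_def sum_pmf_eq_1)
      show "validR H R" using Rc by (simp add: validR_def)
      show "\<forall>h\<in>{1..H}. \<forall>s a V. V \<in> Vset H \<longrightarrow>
        \<bar>(\<Sum>s'\<in>UNIV. thetat h \<bullet> phi s a s' * V s') - (\<Sum>s'\<in>UNIV. pmf (P h s a) s' * V s')\<bar>
          \<le> 2 * bonus phi H lam beta hs K h s a"
      proof (intro ballI allI impI)
        fix h and s :: 's and a :: 'a and V :: "'s \<Rightarrow> real" assume h: "h \<in> {1..H}" and V: "V \<in> Vset H"
        show "\<bar>(\<Sum>s'\<in>UNIV. thetat h \<bullet> phi s a s' * V s') - (\<Sum>s'\<in>UNIV. pmf (P h s a) s' * V s')\<bar>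
          \<le> 2 * bonus phi H lam beta hs K h s a"
        proof (rule E.err_bound[OF h V])
          show "wnorm (thetat h - thetahat phi H lam hs K h) (E.GK hs h) \<le> beta"
            using tc h by (simp add: E.Lam_K)
          show "wnorm (thetahat phi H lam hs K h - theta h) (E.GK hs h) \<le> beta"
            using G h by (simp add: Good_def)
        qed
      qed
    qed
  qed
  let ?M = "exploration phi H lam beta P s1 K"
  have Mdef: "?M = explore P s1 H (\<lambda>hs. polk phi H lam beta hs (Suc (length hs))) K []"
    by (simp add: exploration_def)
  have bad: "measure_pmf.prob ?M (UNIV - Good) \<le> delta"
  proof (cases "real (K - 1) \<le> real d * ell")
    case True
    have "Good = UNIV"
    proof (intro set_eqI iffI)
      fix hs :: "('s,'a) traj list"
      show "hs \<in> Good" unfolding Good_def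
      proof (intro CollectI ballI)
        fix h assume h: "h \<in> {1..H}"
        have "E.wv hs h \<bullet> E.Sv hs h \<le> real (K - 1) * (real H * real H)" by (rule E.caseA[OF h])
        also have "\<dots> \<le> (real H)\<^sup>2 * (real d * ell)"
        proof -
          have "real (K - 1) * (real H * real H) \<le> (real d * ell) * (real H * real H)"
            using True by (intro mult_right_mono) auto
          thus ?thesis by (simp add: power2_eq_square mult.commute)
        qed
        finally show "wnorm (thetahat phi H lam hs K h - theta h) (E.GK hs h) \<le> beta"
          by (rule suff[OF h])
      qed
    qed simp
    thus ?thesis using delta by simp
  next
    case False
    hence dl: "real d * ell < real (K - 1)" by simp
    define eps where "eps = 1 / (real K * real H)"
    define J where "J = nat \<lceil>real K ^ 2 * real H ^ 3 / lam\<rceil>"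
    define N where "N = (netset eps J :: (real^'d) set)"
    define C where "C = card N"
    define L where "L = ln (real H * real C / delta)"
    have eps0: "eps > 0" using H K by (simp add: eps_def)
    have Nfin: "finite N" by (simp add: N_def netset_finite)
    have C1: "1 \<le> C" using netset_card_pos by (simp add: C_def N_def Suc_le_eq)
    have Cb: "C \<le> (2 * J + 1) ^ d" unfolding C_def N_def d_def by (rule netset_card)
    have d1: "d \<ge> 1" by (simp add: d_def Suc_le_eq)
    have budget: "L + 1 \<le> 2 * real d * ell"
      unfolding L_def ell_def by (rule numBudget[OF H K d1 lam0 lam1 delta C1 Cb J_def])
    have err: "(lam + real (K - 1) * (real H)\<^sup>2) * (real d * eps\<^sup>2 / 4) \<le> 1 / 2"
      unfolding eps_def by (rule numErr[OF H K lam0 lam1 ell1 dl])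
    define A where "A = (\<lambda>(h, z). {hs. L \<le> Gf (E.Psi h ((4 / (real H)\<^sup>2) *\<^sub>R z)) hs})"
    have cover: "(UNIV - Good) \<inter> set_pmf ?M \<subseteq> (\<Union>p\<in>{1..H} \<times> N. A p)"
    proof
      fix hs assume hs: "hs \<in> (UNIV - Good) \<inter> set_pmf ?M"
      hence len: "length hs = K" using explore_length Mdef by fastforce
      from hs obtain h where h: "h \<in> {1..H}" and nb: "\<not> wnorm (thetahat phi H lam hs K h - theta h) (E.GK hs h) \<le> beta"
        by (auto simp: Good_def)
      show "hs \<in> (\<Union>p\<in>{1..H} \<times> N. A p)"
      proof (rule ccontr)
        assume "hs \<notin> (\<Union>p\<in>{1..H} \<times> N. A p)"
        hence lt: "\<forall>z\<in>N. Gf (E.Psi h ((4 / (real H)\<^sup>2) *\<^sub>R z)) hs < L"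
          using h by (force simp: A_def)
        have nw: "norm (E.wv hs h) \<le> real J * eps"
        proof -
          have "norm (E.wv hs h) \<le> norm (E.Sv hs h) / lam" by (rule E.w_norm)
          also have "\<dots> \<le> real (K - 1) * (real H * real H) / lam"
            using E.Sv_norm[OF h] lam0 by (intro divide_right_mono) auto
          also have "\<dots> \<le> real J * eps" unfolding J_def eps_def by (rule numJ[OF H K lam0])
          finally show ?thesis .
        qed
        obtain z where z: "z \<in> N" and zd: "(z - E.wv hs h) \<bullet> (z - E.wv hs h) \<le> real d * eps\<^sup>2 / 4"
          using net_approx[OF eps0 nw] by (auto simp: N_def d_def)
        have "E.wv hs h \<bullet> E.Sv hs h \<le> (real H)\<^sup>2 / 2 * Gf (E.Psi h ((4 / (real H)\<^sup>2) *\<^sub>R z)) hs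
           + (lam + real (K - 1) * (real H)\<^sup>2) * ((z - E.wv hs h) \<bullet> (z - E.wv hs h))"
          by (rule E.caseB_det[OF h len])
        also have "\<dots> \<le> (real H)\<^sup>2 / 2 * L + (lam + real (K - 1) * (real H)\<^sup>2) * (real d * eps\<^sup>2 / 4)"
        proof (intro add_mono mult_left_mono)
          show "Gf (E.Psi h ((4 / (real H)\<^sup>2) *\<^sub>R z)) hs \<le> L" using lt z by (simp add: less_imp_le)
        qed (use zd lam0 in auto)
        also have "\<dots> \<le> (real H)\<^sup>2 / 2 * L + 1 / 2" using err by simp
        also have "\<dots> \<le> (real H)\<^sup>2 / 2 * (L + 1)"
        proof -
          have "1 \<le> (real H)\<^sup>2" using H by (simp add: one_le_power)
          thus ?thesis by (simp add: algebra_simps)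
        qed
        also have "\<dots> \<le> (real H)\<^sup>2 / 2 * (2 * real d * ell)" using budget by (intro mult_left_mono) auto
        also have "\<dots> = (real H)\<^sup>2 * (real d * ell)" by simp
        finally have "wnorm (thetahat phi H lam hs K h - theta h) (E.GK hs h) \<le> beta" by (rule suff[OF h])
        with nb show False by simp
      qed
    qed
    have "measure_pmf.prob ?M (UNIV - Good) = measure_pmf.prob ?M ((UNIV - Good) \<inter> set_pmf ?M)"
      by (simp add: measure_Int_set_pmf)
    also have "\<dots> \<le> measure_pmf.prob ?M (\<Union>p\<in>{1..H} \<times> N. A p)"
      by (rule measure_pmf.finite_measure_mono[OF cover]) simp
    also have "\<dots> \<le> (\<Sum>p\<in>{1..H} \<times> N. measure_pmf.prob ?M (A p))"
      by (rule measure_pmf.finite_measure_subadditive_finite) (auto simp: Nfin)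
    also have "\<dots> \<le> (\<Sum>p\<in>{1..H} \<times> N. exp (- L))"
    proof (intro sum_mono)
      fix p assume p: "p \<in> {1..H} \<times> N"
      obtain h z where pz: "p = (h, z)" by (cases p)
      have h: "h \<in> {1..H}" using p pz by auto
      show "measure_pmf.prob ?M (A p) \<le> exp (- L)"
        unfolding pz A_def Mdef by (simp add: E.tail_bound[OF h])
    qed
    also have "\<dots> = real H * real C * exp (- L)" by (simp add: C_def Nfin card_cartesian_product)
    also have "\<dots> = delta"
    proof -
      have "0 < real H * real C / delta" using H C1 delta by simp
      hence "exp (- L) = delta / (real H * real C)" by (simp add: L_def exp_minus exp_ln)
      thus ?thesis using H C1 by simp
    qed
    finally show ?thesis .
  qed
  have "measure_pmf.prob ?M Good = 1 - measure_pmf.prob ?M (UNIV - Good)"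
    using measure_pmf.prob_compl[of Good ?M] by simp
  hence "1 - delta \<le> measure_pmf.prob ?M Good" using bad by simp
  also have "\<dots> \<le> measure_pmf.prob ?M {hs. \<forall>thetat :: nat \<Rightarrow> real^'d.
        (\<forall>h\<in>{1..H}. (\<forall>s a s'. 0 \<le> thetat h \<bullet> phi s a s')
                    \<and> (\<forall>s a. (\<Sum>s'\<in>UNIV. thetat h \<bullet> phi s a s') = 1)
                    \<and> wnorm (thetat h - thetahat phi H lam hs K h) (Lam phi H lam hs K h) \<le> beta)
        \<longrightarrow> (\<forall>R \<pi>. (\<forall>h\<in>{1..H}. \<forall>s a. 0 \<le> R h s a \<and> R h s a \<le> 1)
                 \<and> Vstar H (\<lambda>h s a s'. thetat h \<bullet> phi s a s') R 1 s1
                     - Vpi H (\<lambda>h s a s'. thetat h \<bullet> phi s a s') \<pi> R 1 s1 \<le> eps_opt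
              \<longrightarrow> Vstar H (\<lambda>h s a s'. pmf (P h s a) s') R 1 s1
                     - Vpi H (\<lambda>h s a s'. pmf (P h s a) s') \<pi> R 1 s1
                  \<le> 4 * Vtstar H (\<lambda>h s a s'. pmf (P h s a) s') (bonus phi H lam beta hs K) 1 s1 + eps_opt)}"
    by (rule measure_pmf.finite_measure_mono[OF sub]) simp
  finally show ?thesis .
qed


end
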